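(* Let $\Gamma\subseteq A$ be $\Bbbk$-algebras, $\sim$ an equivalence relation on $\mathrm{cfs}(\Gamma)$, with $\Gamma$ a strong Harish-Chandra block subalgebra of $A$ with respect to $\sim$. For $B,C,D\in\mathrm{cfs}(\Gamma)/{\sim}$, the composition rule described in the context yields a well-defined (independent of all choices) $(\Gamma,\Gamma)$-bimodule map $\mathcal A(C,D)\otimes_\Gamma\mathcal A(B,C)\to\mathcal A(B,D)$; it is associative, satisfies $\gamma.\alpha=(\gamma)\circ\alpha$ and $\alpha.\gamma=\alpha\circ(\gamma)$ for $\gamma\in\Gamma$, and makes $\mathcal A$ a category with identity morphisms $(1)\in\mathcal A(B,B)$.
   Context: $\mathrm{cfs}(\Gamma)$: maximal two-sided ideals $\mathfrak m$ with $\dim\Gamma/\mathfrak m<\infty$. For a class $B$, $\mathcal W(B)=\{\mathfrak m_1\cdots\mathfrak m_k:k\ge0,\mathfrak m_i\in B\}$. For a left $\Gamma$-module $V$, $V(B)=\{v:\mathfrak mv=0$ for some $\mathfrak m\in\mathcal W(B)\}$, and for a right module $V(B)=\{v:v\mathfrak m=0$ for some $\mathfrak m\in\mathcal W(B)\}$; $V$ is a strong block module if $V=\bigoplus_BV(B)$ and each $V(B)$ is killed by some $\mathfrak m\in\mathcal W(B)$. $\Gamma$ is a strong Harish-Chandra block subalgebra of $A$ if for all $B$, $\mathfrak m\in\mathcal W(B)$, the left module $A/A\mathfrak m$ and right module $A/\mathfrak mA$ are strong block modules. $\mathcal A(B,C)=\varprojlim_{\mathfrak n\in\mathcal W(C),\mathfrak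 m\in\mathcal W(B)}A/(\mathfrak nA+A\mathfrak m)$; for $\alpha\in\mathcal A(B,C)$, $\alpha_{\mathfrak m,\mathfrak n}$ is its image in $A/(\mathfrak nA+A\mathfrak m)$, and $(a)$ is the image of $a\in A$. Composition: for $\mathfrak m\in\mathcal W(B)$, $\mathfrak l\in\mathcal W(D)$, choose $\mathfrak n\in\mathcal W(C)$ such that the natural maps give bimodule isomorphisms $A/(\mathfrak lA+A\mathfrak n)\cong(A/\mathfrak lA)(C)$ and $A/(\mathfrak nA+A\mathfrak m)\cong(A/A\mathfrak m)(C)$ (such $\mathfrak n$ exists); given $\alpha\in\mathcal A(B,C)$, $\beta\in\mathcal A(C,D)$ choose $a_0,b_0\in A$ with $\alpha_{\mathfrak m,\mathfrak n}=a_0+\mathfrak nA+A\mathfrak m$, $a_0+A\mathfrak m\in(A/A\mathfrak m)(C)$, $\beta_{\mathfrak n,\mathfrak l}=b_0+\mathfrak lA+A\mathfrak n$, $b_0+\mathfrak lA\in(A/\mathfrak lA)(C)$, and define $(\beta\circ\alpha)_{\mathfrak m,\mathfrak l}=b_0a_0+\mathfrak lA+A\mathfrak m$. *)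

theory Defs
  imports Complex_Main
begin

text \<open>The ambient algebra A is the whole type 'a (a ring with 1), made into an
 associative unital k-algebra by a scalar action scale of a field 'k.  The subalgebra Gamma is
 a subset G of 'a.  Classes of the equivalence relation on cfs(Gamma) are sets of ideals.\<close>

definition k_algebra :: "('k::field \<Rightarrow> 'a::ring_1 \<Rightarrow> 'a) \<Rightarrow> bool" where
  "k_algebra scale \<longleftrightarrow> module scale \<and>
     (\<forall>c x y. scale c (x * y) = scale c x * y) \<and> (\<forall>c x y. scale c (x * y) = x * scale c y)"

definition subalgebra :: "('k::field \<Rightarrow> 'a::ring_1 \<Rightarrow> 'a) \<Rightarrow> 'a set \<Rightarrow> bool" where
  "subalgebra scale G \<longleftrightarrow> 0 \<in> G \<and> 1 \<in> G \<and> (\<forall>x\<in>G. \<forall>y\<in>G. x + y \<in> G \<and> x * y \<in> G) \<and>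
     (\<forall>x\<in>G. - x \<in> G) \<and> (\<forall>c. \<forall>x\<in>G. scale c x \<in> G)"

definition two_sided_ideal :: "'a::ring_1 set \<Rightarrow> 'a set \<Rightarrow> bool" where
  "two_sided_ideal G I \<longleftrightarrow> I \<subseteq> G \<and> 0 \<in> I \<and> (\<forall>x\<in>I. \<forall>y\<in>I. x + y \<in> I) \<and> (\<forall>x\<in>I. - x \<in> I) \<and>
     (\<forall>g\<in>G. \<forall>x\<in>I. g * x \<in> I \<and> x * g \<in> I)"

definition maximal_ideal :: "'a::ring_1 set \<Rightarrow> 'a set \<Rightarrow> bool" where
  "maximal_ideal G I \<longleftrightarrow> two_sided_ideal G I \<and> I \<noteq> G \<and>
     (\<forall>J. two_sided_ideal G J \<and> I \<subseteq> J \<longrightarrow> J = I \<or> J = G)"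

text \<open>dim (G / I) finite: finitely many elements of G span G modulo I.\<close>
definition finite_codim :: "('k::field \<Rightarrow> 'a::ring_1 \<Rightarrow> 'a) \<Rightarrow> 'a set \<Rightarrow> 'a set \<Rightarrow> bool" where
  "finite_codim scale G I \<longleftrightarrow>
     (\<exists>F. finite F \<and> F \<subseteq> G \<and> (\<forall>g\<in>G. \<exists>s\<in>module.span scale F. g - s \<in> I))"

definition cfs :: "('k::field \<Rightarrow> 'a::ring_1 \<Rightarrow> 'a) \<Rightarrow> 'a set \<Rightarrow> 'a set set" where
  "cfs scale G = {I. maximal_ideal G I \<and> finite_codim scale G I}"

definition ideal_mult :: "'a::ring_1 set \<Rightarrow> 'a set \<Rightarrow> 'a set" where
  "ideal_mult I J = {(\<Sum>i<(k::nat). f i * g i) | k f g. \<forall>i<k. f i \<in> I \<and> g i \<in> J}"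

inductive_set Wset :: "'a::ring_1 set \<Rightarrow> 'a set set \<Rightarrow> 'a set set" for G B where
  W_one: "G \<in> Wset G B"
| W_mult: "m \<in> Wset G B \<Longrightarrow> p \<in> B \<Longrightarrow> ideal_mult m p \<in> Wset G B"

text \<open>A m (left ideal of A) and m A (right ideal of A), with A = UNIV.\<close>
definition lideal :: "'a::ring_1 set \<Rightarrow> 'a set" where
  "lideal m = {(\<Sum>i<(k::nat). a i * x i) | k a x. \<forall>i<k. x i \<in> m}"

definition rideal :: "'a::ring_1 set \<Rightarrow> 'a set" where
  "rideal m = {(\<Sum>i<(k::nat). x i * a i) | k a x. \<forall>i<k. x i \<in> m}"

text \<open>qI m n = n A + A m (m the right-hand index, n the left-hand index).\<close>
definition qI :: "'a::ring_1 set \<Rightarrow> 'a set \<Rightarrow> 'a set" where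
  "qI m n = {x + y | x y. x \<in> rideal n \<and> y \<in> lideal m}"

definition coset :: "'a::ring_1 \<Rightarrow> 'a set \<Rightarrow> 'a set" where
  "coset a I = {y. y - a \<in> I}"

text \<open>Preimage in A of V(C) for the left Gamma-module V = A/N, resp. right module V = A/N.\<close>
definition lblock :: "'a::ring_1 set \<Rightarrow> 'a set \<Rightarrow> 'a set set \<Rightarrow> 'a set" where
  "lblock G N C = {a. \<exists>n\<in>Wset G C. \<forall>x\<in>n. x * a \<in> N}"

definition rblock :: "'a::ring_1 set \<Rightarrow> 'a set \<Rightarrow> 'a set set \<Rightarrow> 'a set" where
  "rblock G N C = {a. \<exists>n\<in>Wset G C. \<forall>x\<in>n. a * x \<in> N}"

text \<open>A/N is a strong block module (V = direct sum of the V(C), each killed by some element of W(C)),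
  for the left resp. right Gamma-module structure; cls is the set of classes.\<close>
definition strong_block_left :: "'a::ring_1 set \<Rightarrow> 'a set set set \<Rightarrow> 'a set \<Rightarrow> bool" where
  "strong_block_left G cls N \<longleftrightarrow>
     (\<forall>a. \<exists>S f. finite S \<and> S \<subseteq> cls \<and> (\<forall>C\<in>S. f C \<in> lblock G N C) \<and> a - sum f S \<in> N) \<and>
     (\<forall>S f. finite S \<and> S \<subseteq> cls \<and> (\<forall>C\<in>S. f C \<in> lblock G N C) \<and> sum f S \<in> N \<longrightarrow>
        (\<forall>C\<in>S. f C \<in> N)) \<and>
     (\<forall>C\<in>cls. \<exists>n\<in>Wset G C. \<forall>a\<in>lblock G N C. \<forall>x\<in>n. x * a \<in> N)"

definition strong_block_right :: "'a::ring_1 set \<Rightarrow> 'a set set set \<Rightarrow> 'a set \<Rightarrow> bool" where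
  "strong_block_right G cls N \<longleftrightarrow>
     (\<forall>a. \<exists>S f. finite S \<and> S \<subseteq> cls \<and> (\<forall>C\<in>S. f C \<in> rblock G N C) \<and> a - sum f S \<in> N) \<and>
     (\<forall>S f. finite S \<and> S \<subseteq> cls \<and> (\<forall>C\<in>S. f C \<in> rblock G N C) \<and> sum f S \<in> N \<longrightarrow>
        (\<forall>C\<in>S. f C \<in> N)) \<and>
     (\<forall>C\<in>cls. \<exists>n\<in>Wset G C. \<forall>a\<in>rblock G N C. \<forall>x\<in>n. a * x \<in> N)"

definition strong_HC_block :: "'a::ring_1 set \<Rightarrow> 'a set set set \<Rightarrow> bool" where
  "strong_HC_block G cls \<longleftrightarrow>
     (\<forall>B\<in>cls. \<forall>m\<in>Wset G B. strong_block_left G cls (lideal m) \<and> strong_block_right G cls (rideal m))"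

text \<open>Elements of the inverse limit A(B,C): families alpha m n of cosets of n A + A m,
  indexed by m \<in> W(B), n \<in> W(C), compatible under the projections, and empty outside the index set
  (so that equality of families is equality of functions).\<close>
definition Alim :: "'a::ring_1 set \<Rightarrow> 'a set set \<Rightarrow> 'a set set \<Rightarrow> ('a set \<Rightarrow> 'a set \<Rightarrow> 'a set) set" where
  "Alim G B C = {\<alpha>.
     (\<forall>m n. m \<in> Wset G B \<and> n \<in> Wset G C \<longrightarrow> (\<exists>a. \<alpha> m n = coset a (qI m n))) \<and>
     (\<forall>m m' n n'. m \<in> Wset G B \<longrightarrow> m' \<in> Wset G B \<longrightarrow> n \<in> Wset G C \<longrightarrow> n' \<in> Wset G C \<longrightarrow>
        m \<subseteq> m' \<longrightarrow> n \<subseteq> n' \<longrightarrow> \<alpha> m n \<subseteq> \<alpha> m' n') \<and>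
     (\<forall>m n. \<not> (m \<in> Wset G B \<and> n \<in> Wset G C) \<longrightarrow> \<alpha> m n = {})}"

definition lim_of :: "'a::ring_1 set \<Rightarrow> 'a set set \<Rightarrow> 'a set set \<Rightarrow> 'a \<Rightarrow> 'a set \<Rightarrow> 'a set \<Rightarrow> 'a set" where
  "lim_of G B C a = (\<lambda>m n. if m \<in> Wset G B \<and> n \<in> Wset G C then coset a (qI m n) else {})"

definition lim_add :: "('a::ring_1 set \<Rightarrow> 'a set \<Rightarrow> 'a set) \<Rightarrow> ('a set \<Rightarrow> 'a set \<Rightarrow> 'a set) \<Rightarrow> 'a set \<Rightarrow> 'a set \<Rightarrow> 'a set" where
  "lim_add \<alpha> \<beta> = (\<lambda>m n. {y. \<exists>x\<in>\<alpha> m n. \<exists>z\<in>\<beta> m n. y - (x + z) \<in> qI m n})"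

definition lim_lmult :: "'a::ring_1 \<Rightarrow> ('a set \<Rightarrow> 'a set \<Rightarrow> 'a set) \<Rightarrow> 'a set \<Rightarrow> 'a set \<Rightarrow> 'a set" where
  "lim_lmult g \<alpha> = (\<lambda>m n. {y. \<exists>x\<in>\<alpha> m n. y - g * x \<in> qI m n})"

definition lim_rmult :: "('a::ring_1 set \<Rightarrow> 'a set \<Rightarrow> 'a set) \<Rightarrow> 'a \<Rightarrow> 'a set \<Rightarrow> 'a set \<Rightarrow> 'a set" where
  "lim_rmult \<alpha> g = (\<lambda>m n. {y. \<exists>x\<in>\<alpha> m n. y - x * g \<in> qI m n})"

text \<open>Admissible choices (n, a0, b0) in the composition rule, for m \<in> W(B), l \<in> W(D),
  alpha \<in> A(B,C), beta \<in> A(C,D).  The natural maps (A/lA)(C) \<rightarrow> A/(lA+An) and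
  (A/Am)(C) \<rightarrow> A/(nA+Am) are required to be bijective.\<close>
definition valid_choice ::
  "'a::ring_1 set \<Rightarrow> 'a set set \<Rightarrow> 'a set \<Rightarrow> 'a set \<Rightarrow> ('a set \<Rightarrow> 'a set \<Rightarrow> 'a set) \<Rightarrow>
   ('a set \<Rightarrow> 'a set \<Rightarrow> 'a set) \<Rightarrow> 'a set \<Rightarrow> 'a \<Rightarrow> 'a \<Rightarrow> bool" where
  "valid_choice G C m l \<alpha> \<beta> n a0 b0 \<longleftrightarrow>
     n \<in> Wset G C \<and>
     (\<forall>a. \<exists>a'\<in>rblock G (rideal l) C. a - a' \<in> qI n l) \<and>
     (\<forall>a'\<in>rblock G (rideal l) C. a' \<in> qI n l \<longrightarrow> a' \<in> rideal l) \<and>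
     (\<forall>a. \<exists>a'\<in>lblock G (lideal m) C. a - a' \<in> qI m n) \<and>
     (\<forall>a'\<in>lblock G (lideal m) C. a' \<in> qI m n \<longrightarrow> a' \<in> lideal m) \<and>
     \<alpha> m n = coset a0 (qI m n) \<and> a0 \<in> lblock G (lideal m) C \<and>
     \<beta> n l = coset b0 (qI n l) \<and> b0 \<in> rblock G (rideal l) C"

definition hc_comp ::
  "'a::ring_1 set \<Rightarrow> 'a set set \<Rightarrow> 'a set set \<Rightarrow> 'a set set \<Rightarrow> ('a set \<Rightarrow> 'a set \<Rightarrow> 'a set) \<Rightarrow>
   ('a set \<Rightarrow> 'a set \<Rightarrow> 'a set) \<Rightarrow> 'a set \<Rightarrow> 'a set \<Rightarrow> 'a set" where
  "hc_comp G B C D \<beta> \<alpha> = (\<lambda>m l. if m \<in> Wset G B \<and> l \<in> Wset G D then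
      (THE X. \<exists>n a0 b0. valid_choice G C m l \<alpha> \<beta> n a0 b0 \<and> X = coset (b0 * a0) (qI m l)) else {})"

end

theory Submission
  imports Defs
begin

definition fs :: "'a::ring_1 set \<Rightarrow> 'a set" where
  "fs X = {(\<Sum>i<(k::nat). h i) | k h. \<forall>i<k. h i \<in> X}"

lemma fs_0: "0 \<in> fs X"
  unfolding fs_def by (rule CollectI, rule exI[of _ 0]) auto

lemma fs_step: assumes "y \<in> fs X" "x \<in> X" shows "y + x \<in> fs X"
proof -
  obtain k :: nat and h where y: "y = (\<Sum>i<k. h i)" and h: "\<forall>i<k. h i \<in> X"
    using assms(1) unfolding fs_def by blast
  have "y + x = (\<Sum>i<Suc k. (h(k:=x)) i)"
    using y by (simp add: sum.lessThan_Suc)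
  moreover have "\<forall>i<Suc k. (h(k:=x)) i \<in> X" using h assms(2) by (simp add: less_Suc_eq)
  ultimately show ?thesis unfolding fs_def by blast
qed

lemma fs_X: "x \<in> X \<Longrightarrow> x \<in> fs X"
  using fs_step[OF fs_0, of x X] by simp

lemma fs_least:
  assumes "0 \<in> S" "\<And>x y. x \<in> S \<Longrightarrow> y \<in> S \<Longrightarrow> x + y \<in> S" "X \<subseteq> S"
  shows "fs X \<subseteq> S"
proof
  fix y assume "y \<in> fs X"
  then obtain k :: nat and h where y: "y = (\<Sum>i<k. h i)" and h: "\<forall>i<k. h i \<in> X"
    unfolding fs_def by blast
  have "\<forall>h. (\<forall>i<k. h i \<in> X) \<longrightarrow> (\<Sum>i<k. h i) \<in> S"
  proof (induction k)
    case 0 then show ?case using assms(1) by simp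
  next
    case (Suc k) then show ?case using assms(2,3) by (auto simp: sum.lessThan_Suc)
  qed
  then show "y \<in> S" using y h by blast
qed

lemma fs_add: assumes "y \<in> fs X" "z \<in> fs X" shows "y + z \<in> fs X"
proof -
  have "fs X \<subseteq> {z. y + z \<in> fs X}"
  proof -
    show ?thesis
    proof
      fix z assume "z \<in> fs X"
      then obtain k :: nat and h where z: "z = (\<Sum>i<k. h i)" and h: "\<forall>i<k. h i \<in> X"
        unfolding fs_def by blast
      have "\<forall>h. (\<forall>i<k. h i \<in> X) \<longrightarrow> y + (\<Sum>i<k. h i) \<in> fs X"
      proof (induction k)
        case 0 then show ?case using assms(1) by simp
      next
        case (Suc k) show ?case
        proof (intro allI impI)
          fix h assume h: "\<forall>i<Suc k. h i \<in> X"
          then have "y + sum h {..<k} \<in> fs X" using Suc.IH by auto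
          then show "y + sum h {..<Suc k} \<in> fs X" using fs_step[of "y + sum h {..<k}" X "h k"] h
            by (simp add: sum.lessThan_Suc add.assoc[symmetric])
        qed
      qed
      then show "z \<in> {z. y + z \<in> fs X}" using z h by blast
    qed
  qed
  then show ?thesis using assms(2) by blast
qed

lemma fs_mono: "X \<subseteq> Y \<Longrightarrow> fs X \<subseteq> fs Y"
  by (rule fs_least) (auto intro: fs_0 fs_add fs_X)

lemma fs_map:
  assumes "\<And>x. x \<in> X \<Longrightarrow> \<phi> x \<in> fs Y" "\<phi> 0 = 0" "\<And>x y. \<phi> (x + y) = \<phi> x + \<phi> y"
    and "y \<in> fs X"
  shows "\<phi> y \<in> fs Y"
proof -
  have "fs X \<subseteq> {y. \<phi> y \<in> fs Y}"
    by (rule fs_least) (use assms in \<open>auto intro: fs_0 fs_add\<close>)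
  then show ?thesis using assms(4) by blast
qed

lemma fs_uminus: "y \<in> fs X \<Longrightarrow> (\<And>x. x \<in> X \<Longrightarrow> - x \<in> X) \<Longrightarrow> - y \<in> fs X"
  by (rule fs_map[where \<phi>=uminus]) (auto intro: fs_X)

lemma lideal_fs: "lideal m = fs {a * x | a x. x \<in> m}"
proof
  show "lideal m \<subseteq> fs {a * x | a x. x \<in> m}"
    unfolding lideal_def fs_def by blast
next
  show "fs {a * x | a x. x \<in> m} \<subseteq> lideal m"
  proof
    fix y assume "y \<in> fs {a * x | a x. x \<in> m}"
    then obtain k :: nat and h where y: "y = (\<Sum>i<k. h i)" and h: "\<forall>i<k. \<exists>a x. h i = a * x \<and> x \<in> m"
      unfolding fs_def by blast
    have "\<forall>i. \<exists>p. i < k \<longrightarrow> h i = fst p * snd p \<and> snd p \<in> m" using h by force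
    then obtain p where p: "\<forall>i. i < k \<longrightarrow> h i = fst (p i) * snd (p i) \<and> snd (p i) \<in> m"
      by (rule choice[THEN exE]) blast
    have "y = (\<Sum>i<k. fst (p i) * snd (p i))" using y p by simp
    then have "\<exists>k' a x. y = (\<Sum>i<(k'::nat). a i * x i) \<and> (\<forall>i<k'. x i \<in> m)"
      using p by (intro exI[of _ k] exI[of _ "\<lambda>i. fst (p i)"] exI[of _ "\<lambda>i. snd (p i)"]) auto
    then show "y \<in> lideal m" unfolding lideal_def by blast
  qed
qed

lemma rideal_fs: "rideal m = fs {x * a | x a. x \<in> m}"
proof
  show "rideal m \<subseteq> fs {x * a | x a. x \<in> m}"
    unfolding rideal_def fs_def by blast
next
  show "fs {x * a | x a. x \<in> m} \<subseteq> rideal m"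
  proof
    fix y assume "y \<in> fs {x * a | x a. x \<in> m}"
    then obtain k :: nat and h where y: "y = (\<Sum>i<k. h i)" and h: "\<forall>i<k. \<exists>a x. h i = x * a \<and> x \<in> m"
      unfolding fs_def by blast
    have "\<forall>i. \<exists>p. i < k \<longrightarrow> h i = snd p * fst p \<and> snd p \<in> m" using h by force
    then obtain p where p: "\<forall>i. i < k \<longrightarrow> h i = snd (p i) * fst (p i) \<and> snd (p i) \<in> m"
      by (rule choice[THEN exE]) blast
    have "y = (\<Sum>i<k. snd (p i) * fst (p i))" using y p by simp
    then have "\<exists>k' a x. y = (\<Sum>i<(k'::nat). x i * a i) \<and> (\<forall>i<k'. x i \<in> m)"
      using p by (intro exI[of _ k] exI[of _ "\<lambda>i. fst (p i)"] exI[of _ "\<lambda>i. snd (p i)"]) auto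
    then show "y \<in> rideal m" unfolding rideal_def by blast
  qed
qed

lemma imult_fs: "ideal_mult I J = fs {f * g | f g. f \<in> I \<and> g \<in> J}"
proof
  show "ideal_mult I J \<subseteq> fs {f * g | f g. f \<in> I \<and> g \<in> J}"
    unfolding ideal_mult_def fs_def by blast
next
  show "fs {f * g | f g. f \<in> I \<and> g \<in> J} \<subseteq> ideal_mult I J"
  proof
    fix y assume "y \<in> fs {f * g | f g. f \<in> I \<and> g \<in> J}"
    then obtain k :: nat and h where y: "y = (\<Sum>i<k. h i)" and h: "\<forall>i<k. \<exists>f g. h i = f * g \<and> f \<in> I \<and> g \<in> J"
      unfolding fs_def by blast
    have "\<forall>i. \<exists>p. i < k \<longrightarrow> h i = fst p * snd p \<and> fst p \<in> I \<and> snd p \<in> J" using h by force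
    then obtain p where p: "\<forall>i. i < k \<longrightarrow> h i = fst (p i) * snd (p i) \<and> fst (p i) \<in> I \<and> snd (p i) \<in> J"
      by (rule choice[THEN exE]) blast
    have "y = (\<Sum>i<k. fst (p i) * snd (p i))" using y p by simp
    then have "\<exists>k' f g. y = (\<Sum>i<(k'::nat). f i * g i) \<and> (\<forall>i<k'. f i \<in> I \<and> g i \<in> J)"
      using p by (intro exI[of _ k] exI[of _ "\<lambda>i. fst (p i)"] exI[of _ "\<lambda>i. snd (p i)"]) auto
    then show "y \<in> ideal_mult I J" unfolding ideal_mult_def by blast
  qed
qed

lemma qI_fs: "qI m n = fs ({x * a | x a. x \<in> n} \<union> {a * x | a x. x \<in> m})"
proof
  show "qI m n \<subseteq> fs ({x * a | x a. x \<in> n} \<union> {a * x | a x. x \<in> m})"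
    unfolding qI_def rideal_fs lideal_fs
    using fs_mono[of "{x * a | x a. x \<in> n}" "{x * a | x a. x \<in> n} \<union> {a * x | a x. x \<in> m}"]
      fs_mono[of "{a * x | a x. x \<in> m}" "{x * a | x a. x \<in> n} \<union> {a * x | a x. x \<in> m}"]
    by (auto intro!: fs_add)
next
  show "fs ({x * a | x a. x \<in> n} \<union> {a * x | a x. x \<in> m}) \<subseteq> qI m n"
  proof (rule fs_least)
    show "0 \<in> qI m n" unfolding qI_def using fs_0 unfolding rideal_fs lideal_fs by force
    show "x + y \<in> qI m n" if hx: "x \<in> qI m n" and hy: "y \<in> qI m n" for x y
    proof -
      obtain x1 x2 where "x = x1 + x2" "x1 \<in> rideal n" "x2 \<in> lideal m" using hx unfolding qI_def by blast
      moreover obtain y1 y2 where "y = y1 + y2" "y1 \<in> rideal n" "y2 \<in> lideal m" using hy unfolding qI_def by blast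
      ultimately have "x + y = (x1 + y1) + (x2 + y2)" "x1 + y1 \<in> rideal n" "x2 + y2 \<in> lideal m"
        unfolding rideal_fs lideal_fs by (auto simp: algebra_simps intro: fs_add)
      then show ?thesis unfolding qI_def by blast
    qed
    show "{x * a | x a. x \<in> n} \<union> {a * x | a x. x \<in> m} \<subseteq> qI m n"
    proof
      fix z assume "z \<in> {x * a | x a. x \<in> n} \<union> {a * x | a x. x \<in> m}"
      then show "z \<in> qI m n"
      proof
        assume "z \<in> {x * a | x a. x \<in> n}"
        then have "z \<in> rideal n" "0 \<in> lideal m" unfolding rideal_fs lideal_fs by (auto intro: fs_X fs_0)
        then show ?thesis unfolding qI_def by force
      next
        assume "z \<in> {a * x | a x. x \<in> m}"
        then have "0 \<in> rideal n" "z \<in> lideal m" unfolding rideal_fs lideal_fs by (auto intro: fs_X fs_0)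
        then show ?thesis unfolding qI_def by force
      qed
    qed
  qed
qed

lemma fs_map2:
  assumes "\<And>x. x \<in> X \<Longrightarrow> \<phi> x \<in> X" "\<phi> 0 = 0" "\<And>x y. \<phi> (x + y) = \<phi> x + \<phi> y"
    and "y \<in> fs X"
  shows "\<phi> y \<in> fs X"
  by (rule fs_map[where \<phi>=\<phi>]) (use assms in \<open>auto intro: fs_X\<close>)

lemma lideal_0: "0 \<in> lideal m" unfolding lideal_fs by (rule fs_0)
lemma lideal_add: "x \<in> lideal m \<Longrightarrow> y \<in> lideal m \<Longrightarrow> x + y \<in> lideal m"
  unfolding lideal_fs by (rule fs_add)
lemma lideal_lmult: "y \<in> lideal m \<Longrightarrow> c * y \<in> lideal m"
  unfolding lideal_fs
proof (rule fs_map2[where \<phi>="\<lambda>y. c * y"])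
  fix z assume "z \<in> {a * x |a x. x \<in> m}"
  then obtain a u where "z = a * u" "u \<in> m" by blast
  then have "c * z = (c * a) * u" by (simp add: mult.assoc)
  then show "c * z \<in> {a * x |a x. x \<in> m}" using \<open>u \<in> m\<close> by blast
qed (auto simp: distrib_left)
lemma lideal_neg: "y \<in> lideal m \<Longrightarrow> - y \<in> lideal m"
  using lideal_lmult[of y m "-1"] by simp
lemma lideal_diff: "x \<in> lideal m \<Longrightarrow> y \<in> lideal m \<Longrightarrow> x - y \<in> lideal m"
  using lideal_add[OF _ lideal_neg] by (metis diff_conv_add_uminus)
lemma lideal_mem: "x \<in> m \<Longrightarrow> a * x \<in> lideal m"
  unfolding lideal_fs by (rule fs_X) blast
lemma lideal_mem1: "x \<in> m \<Longrightarrow> x \<in> lideal m"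
  using lideal_mem[of x m 1] by simp
lemma lideal_mono: "m \<subseteq> m' \<Longrightarrow> lideal m \<subseteq> lideal m'"
  unfolding lideal_fs by (rule fs_mono) blast
lemma lideal_rmult: "(\<And>x. x \<in> m \<Longrightarrow> x * g \<in> m) \<Longrightarrow> y \<in> lideal m \<Longrightarrow> y * g \<in> lideal m"
  unfolding lideal_fs
proof (rule fs_map2[where \<phi>="\<lambda>y. y * g"])
  fix z assume h: "\<And>x. x \<in> m \<Longrightarrow> x * g \<in> m" and "z \<in> {a * x |a x. x \<in> m}"
  then obtain a u where "z = a * u" "u \<in> m" by blast
  then have "z * g = a * (u * g)" "u * g \<in> m" using h by (auto simp add: mult.assoc)
  then show "z * g \<in> {a * x |a x. x \<in> m}" by blast
qed (auto simp: distrib_right)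

lemma rideal_0: "0 \<in> rideal m" unfolding rideal_fs by (rule fs_0)
lemma rideal_add: "x \<in> rideal m \<Longrightarrow> y \<in> rideal m \<Longrightarrow> x + y \<in> rideal m"
  unfolding rideal_fs by (rule fs_add)
lemma rideal_rmult: "y \<in> rideal m \<Longrightarrow> y * c \<in> rideal m"
  unfolding rideal_fs
proof (rule fs_map2[where \<phi>="\<lambda>y. y * c"])
  fix z assume "z \<in> {x * a |x a. x \<in> m}"
  then obtain a u where "z = u * a" "u \<in> m" by blast
  then have "z * c = u * (a * c)" by (simp add: mult.assoc)
  then show "z * c \<in> {x * a |x a. x \<in> m}" using \<open>u \<in> m\<close> by blast
qed (auto simp: distrib_right)
lemma rideal_neg: "y \<in> rideal m \<Longrightarrow> - y \<in> rideal m"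
  using rideal_rmult[of y m "-1"] by simp
lemma rideal_diff: "x \<in> rideal m \<Longrightarrow> y \<in> rideal m \<Longrightarrow> x - y \<in> rideal m"
  using rideal_add[OF _ rideal_neg] by (metis diff_conv_add_uminus)
lemma rideal_mem: "x \<in> m \<Longrightarrow> x * a \<in> rideal m"
  unfolding rideal_fs by (rule fs_X) blast
lemma rideal_mem1: "x \<in> m \<Longrightarrow> x \<in> rideal m"
  using rideal_mem[of x m 1] by simp
lemma rideal_mono: "m \<subseteq> m' \<Longrightarrow> rideal m \<subseteq> rideal m'"
  unfolding rideal_fs by (rule fs_mono) blast
lemma rideal_lmult: "(\<And>x. x \<in> m \<Longrightarrow> g * x \<in> m) \<Longrightarrow> y \<in> rideal m \<Longrightarrow> g * y \<in> rideal m"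
  unfolding rideal_fs
proof (rule fs_map2[where \<phi>="\<lambda>y. g * y"])
  fix z assume h: "\<And>x. x \<in> m \<Longrightarrow> g * x \<in> m" and "z \<in> {x * a |x a. x \<in> m}"
  then obtain a u where "z = u * a" "u \<in> m" by blast
  then have "g * z = (g * u) * a" "g * u \<in> m" using h by (auto simp add: mult.assoc)
  then show "g * z \<in> {x * a |x a. x \<in> m}" by blast
qed (auto simp: distrib_left)

lemma qI_intro: "r \<in> rideal n \<Longrightarrow> l \<in> lideal m \<Longrightarrow> r + l \<in> qI m n"
  unfolding qI_def by blast
lemma qI_elim: "y \<in> qI m n \<Longrightarrow> (\<And>r l. y = r + l \<Longrightarrow> r \<in> rideal n \<Longrightarrow> l \<in> lideal m \<Longrightarrow> P) \<Longrightarrow> P"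
  unfolding qI_def by blast
lemma qI_0: "0 \<in> qI m n" using qI_intro[OF rideal_0 lideal_0] by simp
lemma qI_add: "x \<in> qI m n \<Longrightarrow> y \<in> qI m n \<Longrightarrow> x + y \<in> qI m n"
  unfolding qI_fs by (rule fs_add)
lemma qI_neg: "y \<in> qI m n \<Longrightarrow> - y \<in> qI m n"
proof (erule qI_elim)
  fix r l assume "y = r + l" "r \<in> rideal n" "l \<in> lideal m"
  then have "- y = (- r) + (- l)" by simp
  then show "- y \<in> qI m n" using qI_intro[OF rideal_neg lideal_neg] \<open>r \<in> rideal n\<close> \<open>l \<in> lideal m\<close> by metis
qed
lemma qI_diff: "x \<in> qI m n \<Longrightarrow> y \<in> qI m n \<Longrightarrow> x - y \<in> qI m n"
  using qI_add[OF _ qI_neg] by (metis diff_conv_add_uminus)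
lemma lideal_qI: "y \<in> lideal m \<Longrightarrow> y \<in> qI m n"
  using qI_intro[OF rideal_0] by (metis add_0)
lemma rideal_qI: "y \<in> rideal n \<Longrightarrow> y \<in> qI m n"
  using qI_intro[OF _ lideal_0] by (metis add_0_right)
lemma qI_mono: "m \<subseteq> m' \<Longrightarrow> n \<subseteq> n' \<Longrightarrow> qI m n \<subseteq> qI m' n'"
  unfolding qI_fs by (rule fs_mono) blast
lemma qI_lmult: "(\<And>x. x \<in> n \<Longrightarrow> g * x \<in> n) \<Longrightarrow> y \<in> qI m n \<Longrightarrow> g * y \<in> qI m n"
proof (erule qI_elim)
  fix r l assume h: "\<And>x. x \<in> n \<Longrightarrow> g * x \<in> n" and "y = r + l" "r \<in> rideal n" "l \<in> lideal m"
  then show "g * y \<in> qI m n" using qI_intro[OF rideal_lmult[OF h] lideal_lmult] by (simp add: distrib_left)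
qed
lemma qI_rmult: "(\<And>x. x \<in> m \<Longrightarrow> x * g \<in> m) \<Longrightarrow> y \<in> qI m n \<Longrightarrow> y * g \<in> qI m n"
proof (erule qI_elim)
  fix r l assume h: "\<And>x. x \<in> m \<Longrightarrow> x * g \<in> m" and "y = r + l" "r \<in> rideal n" "l \<in> lideal m"
  then show "y * g \<in> qI m n" using qI_intro[OF rideal_rmult lideal_rmult[OF h]] by (simp add: distrib_right)
qed

lemma sum_closed:
  assumes "0 \<in> T" "\<And>x y. x \<in> T \<Longrightarrow> y \<in> T \<Longrightarrow> x + y \<in> T" "\<And>C. C \<in> S \<Longrightarrow> f C \<in> T"
  shows "sum f S \<in> T"
proof (cases "finite S")
  case True then show ?thesis using assms(3)
    by (induction S rule: finite_induct) (auto intro: assms(1,2))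
next
  case False then show ?thesis using assms(1) by simp
qed

lemma coset_iff[simp]: "y \<in> coset a I \<longleftrightarrow> y - a \<in> I"
  unfolding coset_def by simp

lemma coset_qI_eq: "a - b \<in> qI m n \<Longrightarrow> coset a (qI m n) = coset b (qI m n)"
proof -
  assume h: "a - b \<in> qI m n"
  have "y - a \<in> qI m n \<longleftrightarrow> y - b \<in> qI m n" for y
  proof
    assume "y - a \<in> qI m n"
    from qI_add[OF this h] show "y - b \<in> qI m n" by simp
  next
    assume "y - b \<in> qI m n"
    from qI_diff[OF this h] show "y - a \<in> qI m n" by simp
  qed
  then show ?thesis unfolding coset_def by simp
qed

lemma coset_qI_self: "a \<in> coset a (qI m n)"
  using qI_0 by simp

lemma coset_qI_mem_eq: "c \<in> coset a (qI m n) \<Longrightarrow> coset a (qI m n) = coset c (qI m n)"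
proof -
  assume "c \<in> coset a (qI m n)"
  then have "c - a \<in> qI m n" by simp
  from qI_neg[OF this] have "a - c \<in> qI m n" by simp
  then show ?thesis by (rule coset_qI_eq)
qed

definition comax :: "'a::ring_1 set \<Rightarrow> 'a set \<Rightarrow> bool" where
  "comax I J \<longleftrightarrow> (\<exists>i\<in>I. \<exists>j\<in>J. i + j = 1)"

lemma comax_sym: "comax I J \<Longrightarrow> comax J I"
  unfolding comax_def by (metis add.commute)

locale HCL =
  fixes G :: "'a::ring_1 set" and cls :: "'a set set set"
  assumes G0: "0 \<in> G" and G1: "1 \<in> G" and Gadd: "x \<in> G \<Longrightarrow> y \<in> G \<Longrightarrow> x + y \<in> G"
    and Gmul: "x \<in> G \<Longrightarrow> y \<in> G \<Longrightarrow> x * y \<in> G" and Gneg: "x \<in> G \<Longrightarrow> - x \<in> G"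
    and maxl: "B \<in> cls \<Longrightarrow> p \<in> B \<Longrightarrow> maximal_ideal G p"
    and disj: "B \<in> cls \<Longrightarrow> C \<in> cls \<Longrightarrow> B \<noteq> C \<Longrightarrow> B \<inter> C = {}"
    and HC: "strong_HC_block G cls"
begin

abbreviation tsi where "tsi I \<equiv> two_sided_ideal G I"

lemma tsi_G: "tsi G"
  unfolding two_sided_ideal_def using G0 Gadd Gmul Gneg by auto

lemma tsi_sub: "tsi I \<Longrightarrow> x \<in> I \<Longrightarrow> x \<in> G"
  unfolding two_sided_ideal_def by blast
lemma tsi_0: "tsi I \<Longrightarrow> 0 \<in> I"
  unfolding two_sided_ideal_def by blast
lemma tsi_add: "tsi I \<Longrightarrow> x \<in> I \<Longrightarrow> y \<in> I \<Longrightarrow> x + y \<in> I"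
  unfolding two_sided_ideal_def by blast
lemma tsi_neg: "tsi I \<Longrightarrow> x \<in> I \<Longrightarrow> - x \<in> I"
  unfolding two_sided_ideal_def by blast
lemma tsi_lmul: "tsi I \<Longrightarrow> g \<in> G \<Longrightarrow> x \<in> I \<Longrightarrow> g * x \<in> I"
  unfolding two_sided_ideal_def by blast
lemma tsi_rmul: "tsi I \<Longrightarrow> g \<in> G \<Longrightarrow> x \<in> I \<Longrightarrow> x * g \<in> I"
  unfolding two_sided_ideal_def by blast

lemma max_tsi: "maximal_ideal G p \<Longrightarrow> tsi p"
  by (simp add: maximal_ideal_def)
lemma max_neq: "maximal_ideal G p \<Longrightarrow> p \<noteq> G"
  by (simp add: maximal_ideal_def)
lemma max_max: "maximal_ideal G p \<Longrightarrow> tsi J \<Longrightarrow> p \<subseteq> J \<Longrightarrow> J = p \<or> J = G"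
  by (simp add: maximal_ideal_def)

lemma tsi_imult:
  assumes I: "tsi I" and J: "tsi J"
  shows "tsi (ideal_mult I J)"
proof -
  let ?X = "{f * g |f g. f \<in> I \<and> g \<in> J}"
  have sub: "fs ?X \<subseteq> G"
  proof (rule fs_least)
    show "?X \<subseteq> G" using Gmul tsi_sub[OF I] tsi_sub[OF J] by blast
  qed (auto intro: G0 Gadd)
  have neg: "- y \<in> fs ?X" if "y \<in> fs ?X" for y
  proof (rule fs_uminus[OF that])
    fix z assume "z \<in> ?X"
    then obtain f g where "z = f * g" "f \<in> I" "g \<in> J" by blast
    then have "- z = (- f) * g" "- f \<in> I" using tsi_neg[OF I] by auto
    then show "- z \<in> ?X" using \<open>g \<in> J\<close> by blast
  qed
  have lm: "h * y \<in> fs ?X" if "y \<in> fs ?X" "h \<in> G" for y h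
  proof (rule fs_map2[where \<phi>="\<lambda>y. h * y", OF _ _ _ that(1)])
    fix z assume "z \<in> ?X"
    then obtain f g where "z = f * g" "f \<in> I" "g \<in> J" by blast
    then have "h * z = (h * f) * g" "h * f \<in> I" using tsi_lmul[OF I that(2)] by (auto simp: mult.assoc)
    then show "h * z \<in> ?X" using \<open>g \<in> J\<close> by blast
  qed (auto simp: distrib_left)
  have rm: "y * h \<in> fs ?X" if "y \<in> fs ?X" "h \<in> G" for y h
  proof (rule fs_map2[where \<phi>="\<lambda>y. y * h", OF _ _ _ that(1)])
    fix z assume "z \<in> ?X"
    then obtain f g where "z = f * g" "f \<in> I" "g \<in> J" by blast
    then have "z * h = f * (g * h)" "g * h \<in> J" using tsi_rmul[OF J that(2)] by (auto simp: mult.assoc)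
    then show "z * h \<in> ?X" using \<open>f \<in> I\<close> by blast
  qed (auto simp: distrib_right)
  show ?thesis unfolding imult_fs two_sided_ideal_def
  proof (intro conjI ballI)
    show "fs ?X \<subseteq> G" by (rule sub)
  qed (auto intro: neg lm rm fs_0 fs_add)
qed

lemma tsi_W: "n \<in> Wset G B \<Longrightarrow> B \<in> cls \<Longrightarrow> tsi n"
proof (induction rule: Wset.induct)
  case W_one show ?case by (rule tsi_G)
next
  case (W_mult m p)
  have "tsi m" using W_mult.IH W_mult.prems by blast
  moreover have "tsi p" using max_tsi[OF maxl[OF W_mult.prems W_mult.hyps(2)]] .
  ultimately show ?case by (rule tsi_imult)
qed

lemma imult_sub: assumes K: "tsi K" and J: "J \<subseteq> G" shows "ideal_mult K J \<subseteq> K"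
  unfolding imult_fs
proof (rule fs_least)
  show "0 \<in> K" by (rule tsi_0[OF K])
  show "x + y \<in> K" if "x \<in> K" "y \<in> K" for x y using tsi_add[OF K that] .
  show "{f * g |f g. f \<in> K \<and> g \<in> J} \<subseteq> K" using tsi_rmul[OF K] J by blast
qed

lemma imult_mono: "I \<subseteq> I' \<Longrightarrow> ideal_mult I J \<subseteq> ideal_mult I' J"
  unfolding imult_fs by (rule fs_mono) blast

lemma W_dir:
  assumes C: "C \<in> cls" and I: "I \<in> Wset G C" and J: "J \<in> Wset G C"
  shows "\<exists>K\<in>Wset G C. K \<subseteq> I \<and> K \<subseteq> J"
  using J
proof (induction rule: Wset.induct)
  case W_one
  have "I \<subseteq> G" using tsi_sub[OF tsi_W[OF I C]] by blast
  then show ?case using I by blast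
next
  case (W_mult J' p)
  then obtain K' where K': "K' \<in> Wset G C" "K' \<subseteq> I" "K' \<subseteq> J'" by blast
  have pG: "p \<subseteq> G" using tsi_sub[OF max_tsi[OF maxl[OF C W_mult(2)]]] by blast
  have "ideal_mult K' p \<in> Wset G C" using K'(1) W_mult(2) by (rule Wset.W_mult)
  moreover have "ideal_mult K' p \<subseteq> K'" using imult_sub[OF tsi_W[OF K'(1) C] pG] .
  moreover have "ideal_mult K' p \<subseteq> ideal_mult J' p" using imult_mono[OF K'(3)] .
  ultimately show ?case using K'(2) by blast
qed

lemma W_dir3:
  assumes C: "C \<in> cls" and "I \<in> Wset G C" "J \<in> Wset G C" "K \<in> Wset G C"
  shows "\<exists>N\<in>Wset G C. N \<subseteq> I \<and> N \<subseteq> J \<and> N \<subseteq> K"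
  using W_dir[OF C assms(2,3)] W_dir[OF C _ assms(4)] by (meson order_trans)

lemma W_dir4:
  assumes C: "C \<in> cls" and "I \<in> Wset G C" "J \<in> Wset G C" "K \<in> Wset G C" "L \<in> Wset G C"
  shows "\<exists>N\<in>Wset G C. N \<subseteq> I \<and> N \<subseteq> J \<and> N \<subseteq> K \<and> N \<subseteq> L"
  using W_dir3[OF C assms(2,3,4)] W_dir[OF C _ assms(5)] by (meson order_trans)

lemma max_comax:
  assumes p: "maximal_ideal G p" and q: "maximal_ideal G q" and pq: "p \<noteq> q"
  shows "comax p q"
proof -
  have tp: "tsi p" and tq: "tsi q" using max_tsi p q by auto
  let ?J = "{x + y | x y. x \<in> p \<and> y \<in> q}"
  have tJ: "tsi ?J"
  proof -
    have "?J \<subseteq> G" using tsi_sub[OF tp] tsi_sub[OF tq] Gadd by blast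
    moreover have "0 \<in> ?J" using tsi_0[OF tp] tsi_0[OF tq] by force
    moreover have "\<forall>x\<in>?J. \<forall>y\<in>?J. x + y \<in> ?J"
    proof (intro ballI)
      fix x y assume "x \<in> ?J" "y \<in> ?J"
      then obtain a b c d where "x = a + b" "y = c + d" "a \<in> p" "b \<in> q" "c \<in> p" "d \<in> q" by blast
      then have "x + y = (a + c) + (b + d)" "a + c \<in> p" "b + d \<in> q"
        using tsi_add[OF tp] tsi_add[OF tq] by (auto simp: algebra_simps)
      then show "x + y \<in> ?J" by blast
    qed
    moreover have "\<forall>x\<in>?J. - x \<in> ?J"
    proof
      fix x assume "x \<in> ?J"
      then obtain a b where "x = a + b" "a \<in> p" "b \<in> q" by blast
      then have "- x = (- a) + (- b)" "- a \<in> p" "- b \<in> q" using tsi_neg[OF tp] tsi_neg[OF tq] by auto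
      then show "- x \<in> ?J" by blast
    qed
    moreover have "\<forall>g\<in>G. \<forall>x\<in>?J. g * x \<in> ?J \<and> x * g \<in> ?J"
    proof (intro ballI)
      fix g x assume g: "g \<in> G" and "x \<in> ?J"
      then obtain a b where "x = a + b" "a \<in> p" "b \<in> q" by blast
      then have "g * x = g * a + g * b" "x * g = a * g + b * g" "g * a \<in> p" "g * b \<in> q" "a * g \<in> p" "b * g \<in> q"
        using tsi_lmul[OF tp g] tsi_lmul[OF tq g] tsi_rmul[OF tp g] tsi_rmul[OF tq g]
        by (auto simp: algebra_simps)
      then show "g * x \<in> ?J \<and> x * g \<in> ?J" by blast
    qed
    ultimately show ?thesis unfolding two_sided_ideal_def by blast
  qed
  have pJ: "p \<subseteq> ?J" using tsi_0[OF tq] by force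
  have qJ: "q \<subseteq> ?J" using tsi_0[OF tp] by force
  have "?J = p \<or> ?J = G" using max_max[OF p tJ pJ] .
  moreover have "?J \<noteq> p"
  proof
    assume "?J = p"
    then have "q \<subseteq> p" using qJ by simp
    then have "p = q \<or> p = G" using max_max[OF q tp] by blast
    then show False using pq max_neq[OF p] by blast
  qed
  ultimately have "1 \<in> ?J" using G1 by simp
  then obtain a b where "1 = a + b" "a \<in> p" "b \<in> q" by blast
  then show ?thesis unfolding comax_def by metis
qed

lemma comax_mult:
  assumes I: "tsi I" and J: "tsi J" and K: "tsi K" and IJ: "comax I J" and IK: "comax I K"
  shows "comax I (ideal_mult J K)"
proof -
  obtain i j where ij: "i \<in> I" "j \<in> J" "i + j = 1" using IJ unfolding comax_def by blast
  obtain i' k where ik: "i' \<in> I" "k \<in> K" "i' + k = 1" using IK unfolding comax_def by blast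
  have "1 = (i + j) * (i' + k)" using ij ik by simp
  also have "\<dots> = (i * i' + i * k + j * i') + j * k" by (simp add: algebra_simps)
  finally have e: "(i * i' + i * k + j * i') + j * k = 1" by simp
  have jG: "j \<in> G" "i' \<in> G" "k \<in> G" using tsi_sub[OF J] tsi_sub[OF I] tsi_sub[OF K] ij ik by auto
  have "i * i' + i * k + j * i' \<in> I"
    using ij ik jG by (intro tsi_add[OF I] tsi_rmul[OF I] tsi_lmul[OF I]) auto
  moreover have "j * k \<in> ideal_mult J K" unfolding imult_fs using ij ik by (intro fs_X) blast
  ultimately show ?thesis using e unfolding comax_def by blast
qed

lemma W_comax:
  assumes B: "B \<in> cls" and C: "C \<in> cls" and BC: "B \<noteq> C"
    and I: "I \<in> Wset G B" and J: "J \<in> Wset G C"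
  shows "comax I J"
proof -
  have P1: "comax p J" if p: "p \<in> B" for p
    using J
  proof (induction rule: Wset.induct)
    case W_one then show ?case
      unfolding comax_def using tsi_0[OF max_tsi[OF maxl[OF B p]]] G1 by (metis add_0)
  next
    case (W_mult J' q)
    have "p \<noteq> q" using disj[OF B C BC] p W_mult(2) by blast
    then have "comax p q" using max_comax maxl B C p W_mult(2) by blast
    moreover have "tsi p" "tsi q" using max_tsi maxl B C p W_mult(2) by blast+
    ultimately show ?case using comax_mult W_mult(3) tsi_W[OF W_mult(1) C] by blast
  qed
  show ?thesis using I
  proof (induction rule: Wset.induct)
    case W_one then show ?case
      unfolding comax_def using tsi_0[OF tsi_W[OF J C]] G1 by (metis add_0_right)
  next
    case (W_mult I' p)
    have "comax J (ideal_mult I' p)"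
      using comax_mult[OF tsi_W[OF J C] tsi_W[OF W_mult(1) B]] comax_sym[OF W_mult(3)] comax_sym[OF P1[OF W_mult(2)]]
        max_tsi[OF maxl[OF B W_mult(2)]] by blast
    then show ?case by (rule comax_sym)
  qed
qed

end

context HCL
begin

definition killL where
  "killL m C N \<longleftrightarrow> (\<forall>a\<in>lblock G (lideal m) C. \<forall>x\<in>N. x * a \<in> lideal m)"
definition killR where
  "killR l C N \<longleftrightarrow> (\<forall>b\<in>rblock G (rideal l) C. \<forall>x\<in>N. b * x \<in> rideal l)"

lemma killL_mono: "killL m C N \<Longrightarrow> N' \<subseteq> N \<Longrightarrow> killL m C N'"
  unfolding killL_def by blast
lemma killR_mono: "killR l C N \<Longrightarrow> N' \<subseteq> N \<Longrightarrow> killR l C N'"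
  unfolding killR_def by blast

lemma lblock_0: "0 \<in> lblock G (lideal m) C"
  unfolding lblock_def using Wset.W_one[of G C] lideal_0[of m] by (intro CollectI bexI[of _ G]) simp_all
lemma rblock_0: "0 \<in> rblock G (rideal m) C"
  unfolding rblock_def using Wset.W_one[of G C] rideal_0[of m] by (intro CollectI bexI[of _ G]) simp_all

lemma lblock_add:
  assumes C: "C \<in> cls" and a: "a \<in> lblock G (lideal m) C" and b: "b \<in> lblock G (lideal m) C"
  shows "a + b \<in> lblock G (lideal m) C"
proof -
  obtain n1 where n1: "n1 \<in> Wset G C" "\<forall>x\<in>n1. x * a \<in> lideal m" using a unfolding lblock_def by blast
  obtain n2 where n2: "n2 \<in> Wset G C" "\<forall>x\<in>n2. x * b \<in> lideal m" using b unfolding lblock_def by blast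
  obtain K where K: "K \<in> Wset G C" "K \<subseteq> n1" "K \<subseteq> n2" using W_dir[OF C n1(1) n2(1)] by blast
  have "\<forall>x\<in>K. x * (a + b) \<in> lideal m"
    using K n1 n2 by (auto simp: distrib_left intro!: lideal_add)
  then show ?thesis unfolding lblock_def using K(1) by blast
qed

lemma rblock_add:
  assumes C: "C \<in> cls" and a: "a \<in> rblock G (rideal m) C" and b: "b \<in> rblock G (rideal m) C"
  shows "a + b \<in> rblock G (rideal m) C"
proof -
  obtain n1 where n1: "n1 \<in> Wset G C" "\<forall>x\<in>n1. a * x \<in> rideal m" using a unfolding rblock_def by blast
  obtain n2 where n2: "n2 \<in> Wset G C" "\<forall>x\<in>n2. b * x \<in> rideal m" using b unfolding rblock_def by blast
  obtain K where K: "K \<in> Wset G C" "K \<subseteq> n1" "K \<subseteq> n2" using W_dir[OF C n1(1) n2(1)] by blast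
  have "\<forall>x\<in>K. (a + b) * x \<in> rideal m"
    using K n1 n2 by (auto simp: distrib_right intro!: rideal_add)
  then show ?thesis unfolding rblock_def using K(1) by blast
qed

lemma lblock_lmult:
  assumes C: "C \<in> cls" and g: "g \<in> G" and a: "a \<in> lblock G (lideal m) C"
  shows "g * a \<in> lblock G (lideal m) C"
proof -
  obtain n where n: "n \<in> Wset G C" "\<forall>x\<in>n. x * a \<in> lideal m" using a unfolding lblock_def by blast
  have "\<forall>x\<in>n. x * (g * a) \<in> lideal m"
  proof
    fix x assume "x \<in> n"
    then have "x * g \<in> n" using tsi_rmul[OF tsi_W[OF n(1) C] g] by blast
    then show "x * (g * a) \<in> lideal m" using n(2) by (simp add: mult.assoc[symmetric])
  qed
  then show ?thesis unfolding lblock_def using n(1) by blast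
qed

lemma rblock_rmult:
  assumes C: "C \<in> cls" and g: "g \<in> G" and a: "a \<in> rblock G (rideal m) C"
  shows "a * g \<in> rblock G (rideal m) C"
proof -
  obtain n where n: "n \<in> Wset G C" "\<forall>x\<in>n. a * x \<in> rideal m" using a unfolding rblock_def by blast
  have "\<forall>x\<in>n. (a * g) * x \<in> rideal m"
  proof
    fix x assume "x \<in> n"
    then have "g * x \<in> n" using tsi_lmul[OF tsi_W[OF n(1) C] g] by blast
    then show "(a * g) * x \<in> rideal m" using n(2) by (simp add: mult.assoc)
  qed
  then show ?thesis unfolding rblock_def using n(1) by blast
qed

lemma lblock_neg:
  assumes C: "C \<in> cls" and a: "a \<in> lblock G (lideal m) C"
  shows "- a \<in> lblock G (lideal m) C"
  using lblock_lmult[OF C Gneg[OF G1] a] by (metis mult_minus1)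

lemma rblock_neg:
  assumes C: "C \<in> cls" and a: "a \<in> rblock G (rideal m) C"
  shows "- a \<in> rblock G (rideal m) C"
  using rblock_rmult[OF C Gneg[OF G1] a] by (metis mult_minus1_right)

lemma lblock_mono: assumes "m \<subseteq> m'" shows "lblock G (lideal m) C \<subseteq> lblock G (lideal m') C"
proof
  fix a assume "a \<in> lblock G (lideal m) C"
  then obtain n where n: "n \<in> Wset G C" "\<forall>x\<in>n. x * a \<in> lideal m" unfolding lblock_def by blast
  then have "\<forall>x\<in>n. x * a \<in> lideal m'" using lideal_mono[OF assms] by blast
  then show "a \<in> lblock G (lideal m') C" unfolding lblock_def using n(1) by blast
qed
lemma rblock_mono: assumes "m \<subseteq> m'" shows "rblock G (rideal m) C \<subseteq> rblock G (rideal m') C"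
proof
  fix a assume "a \<in> rblock G (rideal m) C"
  then obtain n where n: "n \<in> Wset G C" "\<forall>x\<in>n. a * x \<in> rideal m" unfolding rblock_def by blast
  then have "\<forall>x\<in>n. a * x \<in> rideal m'" using rideal_mono[OF assms] by blast
  then show "a \<in> rblock G (rideal m') C" unfolding rblock_def using n(1) by blast
qed

lemma SB:
  assumes "B \<in> cls" "m \<in> Wset G B"
  shows "strong_block_left G cls (lideal m)" "strong_block_right G cls (rideal m)"
proof -
  have "\<forall>B\<in>cls. \<forall>m\<in>Wset G B. strong_block_left G cls (lideal m) \<and> strong_block_right G cls (rideal m)"
    using HC unfolding strong_HC_block_def .
  then have "strong_block_left G cls (lideal m) \<and> strong_block_right G cls (rideal m)"
    using assms by simp
  then show "strong_block_left G cls (lideal m)" "strong_block_right G cls (rideal m)" by simp_all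
qed

lemma decompL:
  assumes "B \<in> cls" "m \<in> Wset G B"
  shows "\<exists>S f. finite S \<and> S \<subseteq> cls \<and> (\<forall>C\<in>S. f C \<in> lblock G (lideal m) C) \<and> a - sum f S \<in> lideal m"
proof -
  have "\<forall>a. \<exists>S f. finite S \<and> S \<subseteq> cls \<and> (\<forall>C\<in>S. f C \<in> lblock G (lideal m) C) \<and> a - sum f S \<in> lideal m"
    using SB(1)[OF assms] unfolding strong_block_left_def by (rule conjunct1)
  then show ?thesis by (rule spec)
qed
lemma decompR:
  assumes "B \<in> cls" "m \<in> Wset G B"
  shows "\<exists>S f. finite S \<and> S \<subseteq> cls \<and> (\<forall>C\<in>S. f C \<in> rblock G (rideal m) C) \<and> a - sum f S \<in> rideal m"
proof -
  have "\<forall>a. \<exists>S f. finite S \<and> S \<subseteq> cls \<and> (\<forall>C\<in>S. f C \<in> rblock G (rideal m) C) \<and> a - sum f S \<in> rideal m"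
    using SB(2)[OF assms] unfolding strong_block_right_def by (rule conjunct1)
  then show ?thesis by (rule spec)
qed
lemma indepL:
  assumes "B \<in> cls" "m \<in> Wset G B" "finite S" "S \<subseteq> cls" "\<forall>C\<in>S. f C \<in> lblock G (lideal m) C"
    "sum f S \<in> lideal m" "C \<in> S"
  shows "f C \<in> lideal m"
proof -
  have "\<forall>S f. finite S \<and> S \<subseteq> cls \<and> (\<forall>C\<in>S. f C \<in> lblock G (lideal m) C) \<and> sum f S \<in> lideal m \<longrightarrow>
        (\<forall>C\<in>S. f C \<in> lideal m)"
    using SB(1)[OF assms(1,2)] unfolding strong_block_left_def by (rule conjunct1[OF conjunct2])
  then have "finite S \<and> S \<subseteq> cls \<and> (\<forall>C\<in>S. f C \<in> lblock G (lideal m) C) \<and> sum f S \<in> lideal m \<longrightarrow>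
        (\<forall>C\<in>S. f C \<in> lideal m)" by (rule spec[of _ f, OF spec[of _ S]])
  then show ?thesis using assms(3-) by simp
qed
lemma indepR:
  assumes "B \<in> cls" "m \<in> Wset G B" "finite S" "S \<subseteq> cls" "\<forall>C\<in>S. f C \<in> rblock G (rideal m) C"
    "sum f S \<in> rideal m" "C \<in> S"
  shows "f C \<in> rideal m"
proof -
  have "\<forall>S f. finite S \<and> S \<subseteq> cls \<and> (\<forall>C\<in>S. f C \<in> rblock G (rideal m) C) \<and> sum f S \<in> rideal m \<longrightarrow>
        (\<forall>C\<in>S. f C \<in> rideal m)"
    using SB(2)[OF assms(1,2)] unfolding strong_block_right_def by (rule conjunct1[OF conjunct2])
  then have "finite S \<and> S \<subseteq> cls \<and> (\<forall>C\<in>S. f C \<in> rblock G (rideal m) C) \<and> sum f S \<in> rideal m \<longrightarrow>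
        (\<forall>C\<in>S. f C \<in> rideal m)" by (rule spec[of _ f, OF spec[of _ S]])
  then show ?thesis using assms(3-) by simp
qed
lemma killL_ex:
  assumes "B \<in> cls" "m \<in> Wset G B" "C \<in> cls"
  shows "\<exists>n\<in>Wset G C. killL m C n"
proof -
  have "\<forall>C\<in>cls. \<exists>n\<in>Wset G C. \<forall>a\<in>lblock G (lideal m) C. \<forall>x\<in>n. x * a \<in> lideal m"
    using SB(1)[OF assms(1,2)] unfolding strong_block_left_def by (rule conjunct2[OF conjunct2])
  then show ?thesis using assms(3) unfolding killL_def by simp
qed
lemma killR_ex:
  assumes "B \<in> cls" "m \<in> Wset G B" "C \<in> cls"
  shows "\<exists>n\<in>Wset G C. killR m C n"
proof -
  have "\<forall>C\<in>cls. \<exists>n\<in>Wset G C. \<forall>a\<in>rblock G (rideal m) C. \<forall>x\<in>n. a * x \<in> rideal m"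
    using SB(2)[OF assms(1,2)] unfolding strong_block_right_def by (rule conjunct2[OF conjunct2])
  then show ?thesis using assms(3) unfolding killR_def by simp
qed

lemma sum_split_C:
  assumes "finite S"
  shows "sum f S = (if C \<in> S then f C else 0) + sum f (S - {C})"
proof (cases "C \<in> S")
  case True then show ?thesis using sum.remove[OF assms True] by simp
next
  case False then show ?thesis by simp
qed

lemma surjL:
  assumes B: "B \<in> cls" and C: "C \<in> cls" and m: "m \<in> Wset G B" and n: "n \<in> Wset G C"
  shows "\<exists>a'\<in>lblock G (lideal m) C. a - a' \<in> qI m n"
proof -
  obtain S f where S: "finite S" "S \<subseteq> cls" "\<forall>C\<in>S. f C \<in> lblock G (lideal m) C"
    and a: "a - sum f S \<in> lideal m" using decompL[OF B m, of a] by metis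
  have other: "f C' \<in> qI m n" if C': "C' \<in> S - {C}" for C'
  proof -
    have C'cls: "C' \<in> cls" "C' \<noteq> C" using C' S(2) by auto
    have "f C' \<in> lblock G (lideal m) C'" using S(3) C' by simp
    then obtain n' where n': "n' \<in> Wset G C'" "\<forall>x\<in>n'. x * f C' \<in> lideal m"
      unfolding lblock_def by blast
    obtain i j where ij: "i \<in> n'" "j \<in> n" "i + j = 1"
      using W_comax[OF C'cls(1) C C'cls(2) n'(1) n] unfolding comax_def by blast
    have "i * f C' + j * f C' = (i + j) * f C'" by (simp add: distrib_right)
    then have e: "f C' = i * f C' + j * f C'" using ij(3) by simp
    have "i * f C' \<in> qI m n" using n'(2) ij(1) lideal_qI by blast
    moreover have "j * f C' \<in> qI m n" using ij(2) rideal_qI rideal_mem by blast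
    ultimately show ?thesis using qI_add e by metis
  qed
  have s: "sum f (S - {C}) \<in> qI m n"
    by (rule sum_closed[OF qI_0 qI_add other])
  define a' where "a' = (if C \<in> S then f C else 0)"
  have "a' \<in> lblock G (lideal m) C"
  proof (cases "C \<in> S")
    case True then show ?thesis unfolding a'_def using S(3) by simp
  next
    case False then show ?thesis unfolding a'_def using lblock_0 by simp
  qed
  moreover have eq: "a - a' = (a - sum f S) + sum f (S - {C})"
    using sum_split_C[OF S(1), of f C] unfolding a'_def by (simp add: algebra_simps)
  have "a - a' \<in> qI m n" unfolding eq using qI_add[OF lideal_qI[OF a] s] .
  ultimately show ?thesis by blast
qed

lemma surjR:
  assumes D: "D \<in> cls" and C: "C \<in> cls" and l: "l \<in> Wset G D" and n: "n \<in> Wset G C"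
  shows "\<exists>b'\<in>rblock G (rideal l) C. b - b' \<in> qI n l"
proof -
  obtain S f where S: "finite S" "S \<subseteq> cls" "\<forall>C\<in>S. f C \<in> rblock G (rideal l) C"
    and b: "b - sum f S \<in> rideal l" using decompR[OF D l, of b] by metis
  have other: "f C' \<in> qI n l" if C': "C' \<in> S - {C}" for C'
  proof -
    have C'cls: "C' \<in> cls" "C' \<noteq> C" using C' S(2) by auto
    have "f C' \<in> rblock G (rideal l) C'" using S(3) C' by simp
    then obtain n' where n': "n' \<in> Wset G C'" "\<forall>x\<in>n'. f C' * x \<in> rideal l"
      unfolding rblock_def by blast
    obtain i j where ij: "i \<in> n'" "j \<in> n" "i + j = 1"
      using W_comax[OF C'cls(1) C C'cls(2) n'(1) n] unfolding comax_def by blast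
    have "f C' * i + f C' * j = f C' * (i + j)" by (simp add: distrib_left)
    then have e: "f C' = f C' * i + f C' * j" using ij(3) by simp
    have "f C' * i \<in> qI n l" using n'(2) ij(1) rideal_qI by blast
    moreover have "f C' * j \<in> qI n l" using ij(2) lideal_qI lideal_mem by blast
    ultimately show ?thesis using qI_add e by metis
  qed
  have s: "sum f (S - {C}) \<in> qI n l"
    by (rule sum_closed[OF qI_0 qI_add other])
  define b' where "b' = (if C \<in> S then f C else 0)"
  have "b' \<in> rblock G (rideal l) C"
  proof (cases "C \<in> S")
    case True then show ?thesis unfolding b'_def using S(3) by simp
  next
    case False then show ?thesis unfolding b'_def using rblock_0 by simp
  qed
  moreover have eq: "b - b' = (b - sum f S) + sum f (S - {C})"
    using sum_split_C[OF S(1), of f C] unfolding b'_def by (simp add: algebra_simps)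
  have "b - b' \<in> qI n l" unfolding eq using qI_add[OF rideal_qI[OF b] s] .
  ultimately show ?thesis by blast
qed

end

context HCL
begin

lemma injL:
  assumes B: "B \<in> cls" and C: "C \<in> cls" and m: "m \<in> Wset G B" and n: "n \<in> Wset G C"
    and kill: "killL m C n" and a'B: "a' \<in> lblock G (lideal m) C" and a'q: "a' \<in> qI m n"
  shows "a' \<in> lideal m"
proof -
  define oth where "oth y \<longleftrightarrow> (\<exists>S f. finite S \<and> S \<subseteq> cls \<and> C \<notin> S \<and>
      (\<forall>C'\<in>S. f C' \<in> lblock G (lideal m) C') \<and> y - sum f S \<in> lideal m)" for y
  have oth0: "oth 0" unfolding oth_def
    by (rule exI[of _ "{}"]) (simp add: lideal_0)
  have othadd: "oth (y1 + y2)" if h1: "oth y1" and h2: "oth y2" for y1 y2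
  proof -
    obtain S1 f1 where S1: "finite S1" "S1 \<subseteq> cls" "C \<notin> S1" "\<forall>C'\<in>S1. f1 C' \<in> lblock G (lideal m) C'"
      "y1 - sum f1 S1 \<in> lideal m" using h1 unfolding oth_def by metis
    obtain S2 f2 where S2: "finite S2" "S2 \<subseteq> cls" "C \<notin> S2" "\<forall>C'\<in>S2. f2 C' \<in> lblock G (lideal m) C'"
      "y2 - sum f2 S2 \<in> lideal m" using h2 unfolding oth_def by metis
    define S where "S = S1 \<union> S2"
    define g1 where "g1 C' = (if C' \<in> S1 then f1 C' else 0)" for C'
    define g2 where "g2 C' = (if C' \<in> S2 then f2 C' else 0)" for C'
    define f where "f C' = g1 C' + g2 C'" for C'
    have fin: "finite S" unfolding S_def using S1(1) S2(1) by simp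
    have "sum g1 S = sum f1 (S \<inter> S1)" unfolding g1_def using sum.inter_restrict[OF fin, of f1 S1] by simp
    also have "S \<inter> S1 = S1" unfolding S_def by blast
    finally have e1: "sum g1 S = sum f1 S1" .
    have "sum g2 S = sum f2 (S \<inter> S2)" unfolding g2_def using sum.inter_restrict[OF fin, of f2 S2] by simp
    also have "S \<inter> S2 = S2" unfolding S_def by blast
    finally have e2: "sum g2 S = sum f2 S2" .
    have sf: "sum f S = sum f1 S1 + sum f2 S2" unfolding f_def sum.distrib e1 e2 ..
    have fB: "f C' \<in> lblock G (lideal m) C'" if "C' \<in> S" for C'
    proof -
      have Ccls: "C' \<in> cls" using that S1(2) S2(2) unfolding S_def by blast
      have "g1 C' \<in> lblock G (lideal m) C'"
        unfolding g1_def using S1(4) lblock_0 by (cases "C' \<in> S1") simp_all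
      moreover have "g2 C' \<in> lblock G (lideal m) C'"
        unfolding g2_def using S2(4) lblock_0 by (cases "C' \<in> S2") simp_all
      ultimately show ?thesis unfolding f_def by (rule lblock_add[OF Ccls])
    qed
    have eq: "y1 + y2 - sum f S = (y1 - sum f1 S1) + (y2 - sum f2 S2)" unfolding sf by (simp add: algebra_simps)
    have "y1 + y2 - sum f S \<in> lideal m" unfolding eq using lideal_add[OF S1(5) S2(5)] .
    moreover have "S \<subseteq> cls" "C \<notin> S" unfolding S_def using S1 S2 by auto
    ultimately show ?thesis unfolding oth_def using fin fB by blast
  qed
  have othX: "oth (x * c)" if x: "x \<in> n" for x c
  proof -
    obtain S f where S: "finite S" "S \<subseteq> cls" "\<forall>C\<in>S. f C \<in> lblock G (lideal m) C"
      and c: "c - sum f S \<in> lideal m" using decompL[OF B m, of c] by metis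
    define f' where "f' C' = x * f C'" for C'
    have xG: "x \<in> G" using tsi_sub[OF tsi_W[OF n C] x] .
    have f'B: "f' C' \<in> lblock G (lideal m) C'" if "C' \<in> S - {C}" for C'
    proof -
      have "C' \<in> cls" "f C' \<in> lblock G (lideal m) C'" using that S(2,3) by auto
      then show ?thesis unfolding f'_def by (rule lblock_lmult[OF _ xG])
    qed
    have sp: "sum f S = (if C \<in> S then f C else 0) + sum f (S - {C})" by (rule sum_split_C[OF S(1)])
    have "x * c - sum f' (S - {C}) = x * (c - sum f S) + x * (if C \<in> S then f C else 0)"
      unfolding f'_def sum_distrib_left[symmetric] sp by (simp add: algebra_simps)
    moreover have "x * (c - sum f S) \<in> lideal m" using lideal_lmult[OF c] .
    moreover have "x * (if C \<in> S then f C else 0) \<in> lideal m"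
    proof (cases "C \<in> S")
      case True
      then have "f C \<in> lblock G (lideal m) C" using S(3) by simp
      then show ?thesis using kill x True unfolding killL_def by simp
    next
      case False then show ?thesis using lideal_0 by simp
    qed
    ultimately have "x * c - sum f' (S - {C}) \<in> lideal m" using lideal_add by metis
    moreover have "finite (S - {C})" "S - {C} \<subseteq> cls" "C \<notin> S - {C}" using S by auto
    ultimately show ?thesis unfolding oth_def using f'B by blast
  qed
  have "rideal n \<subseteq> {y. oth y}" unfolding rideal_fs
  proof (rule fs_least)
    show "0 \<in> {y. oth y}" using oth0 by simp
    show "x + y \<in> {y. oth y}" if "x \<in> {y. oth y}" "y \<in> {y. oth y}" for x y
      using othadd that by simp
    show "{x * a |x a. x \<in> n} \<subseteq> {y. oth y}" using othX by blast
  qed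
  obtain r l where rl: "a' = r + l" "r \<in> rideal n" "l \<in> lideal m" using a'q by (rule qI_elim)
  have "oth r" using \<open>rideal n \<subseteq> {y. oth y}\<close> rl(2) by blast
  then obtain S f where S: "finite S" "S \<subseteq> cls" "C \<notin> S" "\<forall>C'\<in>S. f C' \<in> lblock G (lideal m) C'"
      "r - sum f S \<in> lideal m" unfolding oth_def by metis
  define f'' where "f'' C' = (if C' = C then a' else - f C')" for C'
  have "sum f'' (insert C S) = f'' C + sum f'' S" by (rule sum.insert[OF S(1) S(3)])
  also have "f'' C = a'" unfolding f''_def by simp
  also have "sum f'' S = sum (\<lambda>C'. - f C') S"
    by (rule sum.cong) (use S(3) f''_def in auto)
  also have "a' + \<dots> = (r - sum f S) + l" using rl(1) by (simp add: sum_negf algebra_simps)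
  finally have "sum f'' (insert C S) \<in> lideal m" using lideal_add[OF S(5) rl(3)] by simp
  moreover have "\<forall>C'\<in>insert C S. f'' C' \<in> lblock G (lideal m) C'"
  proof
    fix C' assume C': "C' \<in> insert C S"
    show "f'' C' \<in> lblock G (lideal m) C'"
    proof (cases "C' = C")
      case True then show ?thesis using a'B f''_def by simp
    next
      case False
      then have "C' \<in> S" using C' by simp
      then have "C' \<in> cls" "f C' \<in> lblock G (lideal m) C'" using S(2,4) by auto
      then have "- f C' \<in> lblock G (lideal m) C'" by (rule lblock_neg)
      then show ?thesis using False f''_def by simp
    qed
  qed
  ultimately have "f'' C \<in> lideal m"
    using indepL[OF B m, of "insert C S" f'' C] S(1,2) C by simp
  then show ?thesis using f''_def by simp
qed

lemma injR:
  assumes D: "D \<in> cls" and C: "C \<in> cls" and l: "l \<in> Wset G D" and n: "n \<in> Wset G C"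
    and kill: "killR l C n" and a'B: "a' \<in> rblock G (rideal l) C" and a'q: "a' \<in> qI n l"
  shows "a' \<in> rideal l"
proof -
  define oth where "oth y \<longleftrightarrow> (\<exists>S f. finite S \<and> S \<subseteq> cls \<and> C \<notin> S \<and>
      (\<forall>C'\<in>S. f C' \<in> rblock G (rideal l) C') \<and> y - sum f S \<in> rideal l)" for y
  have oth0: "oth 0" unfolding oth_def
    by (rule exI[of _ "{}"]) (simp add: rideal_0)
  have othadd: "oth (y1 + y2)" if h1: "oth y1" and h2: "oth y2" for y1 y2
  proof -
    obtain S1 f1 where S1: "finite S1" "S1 \<subseteq> cls" "C \<notin> S1" "\<forall>C'\<in>S1. f1 C' \<in> rblock G (rideal l) C'"
      "y1 - sum f1 S1 \<in> rideal l" using h1 unfolding oth_def by metis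
    obtain S2 f2 where S2: "finite S2" "S2 \<subseteq> cls" "C \<notin> S2" "\<forall>C'\<in>S2. f2 C' \<in> rblock G (rideal l) C'"
      "y2 - sum f2 S2 \<in> rideal l" using h2 unfolding oth_def by metis
    define S where "S = S1 \<union> S2"
    define g1 where "g1 C' = (if C' \<in> S1 then f1 C' else 0)" for C'
    define g2 where "g2 C' = (if C' \<in> S2 then f2 C' else 0)" for C'
    define f where "f C' = g1 C' + g2 C'" for C'
    have fin: "finite S" unfolding S_def using S1(1) S2(1) by simp
    have "sum g1 S = sum f1 (S \<inter> S1)" unfolding g1_def using sum.inter_restrict[OF fin, of f1 S1] by simp
    also have "S \<inter> S1 = S1" unfolding S_def by blast
    finally have e1: "sum g1 S = sum f1 S1" .
    have "sum g2 S = sum f2 (S \<inter> S2)" unfolding g2_def using sum.inter_restrict[OF fin, of f2 S2] by simp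
    also have "S \<inter> S2 = S2" unfolding S_def by blast
    finally have e2: "sum g2 S = sum f2 S2" .
    have sf: "sum f S = sum f1 S1 + sum f2 S2" unfolding f_def sum.distrib e1 e2 ..
    have fB: "f C' \<in> rblock G (rideal l) C'" if "C' \<in> S" for C'
    proof -
      have Ccls: "C' \<in> cls" using that S1(2) S2(2) unfolding S_def by blast
      have "g1 C' \<in> rblock G (rideal l) C'"
        unfolding g1_def using S1(4) rblock_0 by (cases "C' \<in> S1") simp_all
      moreover have "g2 C' \<in> rblock G (rideal l) C'"
        unfolding g2_def using S2(4) rblock_0 by (cases "C' \<in> S2") simp_all
      ultimately show ?thesis unfolding f_def by (rule rblock_add[OF Ccls])
    qed
    have eq: "y1 + y2 - sum f S = (y1 - sum f1 S1) + (y2 - sum f2 S2)" unfolding sf by (simp add: algebra_simps)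
    have "y1 + y2 - sum f S \<in> rideal l" unfolding eq using rideal_add[OF S1(5) S2(5)] .
    moreover have "S \<subseteq> cls" "C \<notin> S" unfolding S_def using S1 S2 by auto
    ultimately show ?thesis unfolding oth_def using fin fB by blast
  qed
  have othX: "oth (c * x)" if x: "x \<in> n" for x c
  proof -
    obtain S f where S: "finite S" "S \<subseteq> cls" "\<forall>C\<in>S. f C \<in> rblock G (rideal l) C"
      and c: "c - sum f S \<in> rideal l" using decompR[OF D l, of c] by metis
    define f' where "f' C' = f C' * x" for C'
    have xG: "x \<in> G" using tsi_sub[OF tsi_W[OF n C] x] .
    have f'B: "f' C' \<in> rblock G (rideal l) C'" if "C' \<in> S - {C}" for C'
    proof -
      have "C' \<in> cls" "f C' \<in> rblock G (rideal l) C'" using that S(2,3) by auto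
      then show ?thesis unfolding f'_def by (rule rblock_rmult[OF _ xG])
    qed
    have sp: "sum f S = (if C \<in> S then f C else 0) + sum f (S - {C})" by (rule sum_split_C[OF S(1)])
    have "c * x - sum f' (S - {C}) = (c - sum f S) * x + (if C \<in> S then f C else 0) * x"
      unfolding f'_def sum_distrib_right[symmetric] sp by (simp add: algebra_simps)
    moreover have "(c - sum f S) * x \<in> rideal l" using rideal_rmult[OF c] .
    moreover have "(if C \<in> S then f C else 0) * x \<in> rideal l"
    proof (cases "C \<in> S")
      case True
      then have "f C \<in> rblock G (rideal l) C" using S(3) by simp
      then show ?thesis using kill x True unfolding killR_def by simp
    next
      case False then show ?thesis using rideal_0 by simp
    qed
    ultimately have "c * x - sum f' (S - {C}) \<in> rideal l" using rideal_add by metis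
    moreover have "finite (S - {C})" "S - {C} \<subseteq> cls" "C \<notin> S - {C}" using S by auto
    ultimately show ?thesis unfolding oth_def using f'B by blast
  qed
  have "lideal n \<subseteq> {y. oth y}" unfolding lideal_fs
  proof (rule fs_least)
    show "0 \<in> {y. oth y}" using oth0 by simp
    show "x + y \<in> {y. oth y}" if "x \<in> {y. oth y}" "y \<in> {y. oth y}" for x y
      using othadd that by simp
    show "{a * x |a x. x \<in> n} \<subseteq> {y. oth y}" using othX by blast
  qed
  obtain r y where rl: "a' = r + y" "r \<in> rideal l" "y \<in> lideal n" using a'q by (rule qI_elim)
  have "oth y" using \<open>lideal n \<subseteq> {y. oth y}\<close> rl(3) by blast
  then obtain S f where S: "finite S" "S \<subseteq> cls" "C \<notin> S" "\<forall>C'\<in>S. f C' \<in> rblock G (rideal l) C'"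
      "y - sum f S \<in> rideal l" unfolding oth_def by metis
  define f'' where "f'' C' = (if C' = C then a' else - f C')" for C'
  have "sum f'' (insert C S) = f'' C + sum f'' S" by (rule sum.insert[OF S(1) S(3)])
  also have "f'' C = a'" unfolding f''_def by simp
  also have "sum f'' S = sum (\<lambda>C'. - f C') S"
    by (rule sum.cong) (use S(3) f''_def in auto)
  also have "a' + \<dots> = (y - sum f S) + r" using rl(1) by (simp add: sum_negf algebra_simps)
  finally have "sum f'' (insert C S) \<in> rideal l" using rideal_add[OF S(5) rl(2)] by simp
  moreover have "\<forall>C'\<in>insert C S. f'' C' \<in> rblock G (rideal l) C'"
  proof
    fix C' assume C': "C' \<in> insert C S"
    show "f'' C' \<in> rblock G (rideal l) C'"
    proof (cases "C' = C")
      case True then show ?thesis using a'B f''_def by simp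
    next
      case False
      then have "C' \<in> S" using C' by simp
      then have "C' \<in> cls" "f C' \<in> rblock G (rideal l) C'" using S(2,4) by auto
      then have "- f C' \<in> rblock G (rideal l) C'" by (rule rblock_neg)
      then show ?thesis using False f''_def by simp
    qed
  qed
  ultimately have "f'' C \<in> rideal l"
    using indepR[OF D l, of "insert C S" f'' C] S(1,2) C by simp
  then show ?thesis using f''_def by simp
qed

end

context HCL
begin

lemma killL_qI:
  assumes kill: "killL m C n" and c: "c \<in> lblock G (lideal m) C" and q: "q \<in> qI n l"
  shows "q * c \<in> qI m l"
proof -
  obtain r y where ry: "q = r + y" "r \<in> rideal l" "y \<in> lideal n" using q by (rule qI_elim)
  have "lideal n \<subseteq> {y. y * c \<in> lideal m}" unfolding lideal_fs[of n]
  proof (rule fs_least)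
    show "0 \<in> {y. y * c \<in> lideal m}" using lideal_0 by simp
    fix u v assume "u \<in> {y. y * c \<in> lideal m}" "v \<in> {y. y * c \<in> lideal m}"
    then show "u + v \<in> {y. y * c \<in> lideal m}" using lideal_add by (simp add: distrib_right)
  next
    show "{a * x |a x. x \<in> n} \<subseteq> {y. y * c \<in> lideal m}"
    proof
      fix z assume "z \<in> {a * x |a x. x \<in> n}"
      then obtain a x where z: "z = a * x" "x \<in> n" by blast
      have "x * c \<in> lideal m" using kill c z(2) unfolding killL_def by blast
      then have "a * (x * c) \<in> lideal m" by (rule lideal_lmult)
      then show "z \<in> {y. y * c \<in> lideal m}" using z(1) by (simp add: mult.assoc)
    qed
  qed
  then have "y * c \<in> lideal m" using ry(3) by blast
  moreover have "r * c \<in> rideal l" using rideal_rmult[OF ry(2)] .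
  ultimately have "r * c + y * c \<in> qI m l" by (intro qI_intro)
  then show ?thesis using ry(1) by (simp add: distrib_right)
qed

lemma killR_qI:
  assumes kill: "killR l C n" and d: "d \<in> rblock G (rideal l) C" and q: "q \<in> qI m n"
  shows "d * q \<in> qI m l"
proof -
  obtain r y where ry: "q = r + y" "r \<in> rideal n" "y \<in> lideal m" using q by (rule qI_elim)
  have "rideal n \<subseteq> {r. d * r \<in> rideal l}" unfolding rideal_fs[of n]
  proof (rule fs_least)
    show "0 \<in> {r. d * r \<in> rideal l}" using rideal_0 by simp
    fix u v assume "u \<in> {r. d * r \<in> rideal l}" "v \<in> {r. d * r \<in> rideal l}"
    then show "u + v \<in> {r. d * r \<in> rideal l}" using rideal_add by (simp add: distrib_left)
  next
    show "{x * a |x a. x \<in> n} \<subseteq> {r. d * r \<in> rideal l}"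
    proof
      fix z assume "z \<in> {x * a |x a. x \<in> n}"
      then obtain a x where z: "z = x * a" "x \<in> n" by blast
      have "d * x \<in> rideal l" using kill d z(2) unfolding killR_def by blast
      then have "(d * x) * a \<in> rideal l" by (rule rideal_rmult)
      then show "z \<in> {r. d * r \<in> rideal l}" using z(1) by (simp add: mult.assoc)
    qed
  qed
  then have "d * r \<in> rideal l" using ry(2) by blast
  moreover have "d * y \<in> lideal m" using lideal_lmult[OF ry(3)] .
  ultimately have "d * r + d * y \<in> qI m l" by (intro qI_intro)
  then show ?thesis using ry(1) by (simp add: distrib_left)
qed

lemma valid_parts:
  assumes "valid_choice G C m l \<alpha> \<beta> n a0 b0"
  shows "n \<in> Wset G C"
    "\<And>a'. a' \<in> rblock G (rideal l) C \<Longrightarrow> a' \<in> qI n l \<Longrightarrow> a' \<in> rideal l"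
    "\<And>a'. a' \<in> lblock G (lideal m) C \<Longrightarrow> a' \<in> qI m n \<Longrightarrow> a' \<in> lideal m"
    "\<alpha> m n = coset a0 (qI m n)" "a0 \<in> lblock G (lideal m) C"
    "\<beta> n l = coset b0 (qI n l)" "b0 \<in> rblock G (rideal l) C"
  using assms unfolding valid_choice_def by simp_all

lemma valid_killL:
  assumes v: "valid_choice G C m l \<alpha> \<beta> n a0 b0" and C: "C \<in> cls"
  shows "killL m C n"
  unfolding killL_def
proof (intro ballI)
  fix a x assume a: "a \<in> lblock G (lideal m) C" and x: "x \<in> n"
  have n: "n \<in> Wset G C" by (rule valid_parts(1)[OF v])
  have "x \<in> G" using tsi_sub[OF tsi_W[OF n C] x] .
  then have "x * a \<in> lblock G (lideal m) C" using lblock_lmult[OF C _ a] by blast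
  moreover have "x * a \<in> qI m n" using rideal_qI[OF rideal_mem[OF x]] .
  ultimately show "x * a \<in> lideal m" by (rule valid_parts(3)[OF v])
qed

lemma valid_killR:
  assumes v: "valid_choice G C m l \<alpha> \<beta> n a0 b0" and C: "C \<in> cls"
  shows "killR l C n"
  unfolding killR_def
proof (intro ballI)
  fix b x assume b: "b \<in> rblock G (rideal l) C" and x: "x \<in> n"
  have n: "n \<in> Wset G C" by (rule valid_parts(1)[OF v])
  have "x \<in> G" using tsi_sub[OF tsi_W[OF n C] x] .
  then have "b * x \<in> rblock G (rideal l) C" using rblock_rmult[OF C _ b] by blast
  moreover have "b * x \<in> qI n l" using lideal_qI[OF lideal_mem[OF x]] .
  ultimately show "b * x \<in> rideal l" by (rule valid_parts(2)[OF v])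
qed

lemma Alim_coset:
  "\<alpha> \<in> Alim G B C \<Longrightarrow> m \<in> Wset G B \<Longrightarrow> n \<in> Wset G C \<Longrightarrow> \<exists>a. \<alpha> m n = coset a (qI m n)"
  unfolding Alim_def by simp
lemma Alim_mono:
  "\<alpha> \<in> Alim G B C \<Longrightarrow> m \<in> Wset G B \<Longrightarrow> m' \<in> Wset G B \<Longrightarrow> n \<in> Wset G C \<Longrightarrow> n' \<in> Wset G C \<Longrightarrow>
    m \<subseteq> m' \<Longrightarrow> n \<subseteq> n' \<Longrightarrow> \<alpha> m n \<subseteq> \<alpha> m' n'"
  unfolding Alim_def by simp
lemma Alim_out:
  "\<alpha> \<in> Alim G B C \<Longrightarrow> \<not> (m \<in> Wset G B \<and> n \<in> Wset G C) \<Longrightarrow> \<alpha> m n = {}"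
  unfolding Alim_def by simp
lemma Alim_mem_coset:
  assumes "\<alpha> \<in> Alim G B C" "m \<in> Wset G B" "n \<in> Wset G C" "c \<in> \<alpha> m n"
  shows "\<alpha> m n = coset c (qI m n)"
proof -
  obtain a where a: "\<alpha> m n = coset a (qI m n)" using Alim_coset[OF assms(1-3)] by blast
  show ?thesis using a coset_qI_mem_eq assms(4) by metis
qed
lemma Alim_ne:
  assumes "\<alpha> \<in> Alim G B C" "m \<in> Wset G B" "n \<in> Wset G C"
  obtains c where "c \<in> \<alpha> m n"
proof -
  obtain a where a: "\<alpha> m n = coset a (qI m n)" using Alim_coset[OF assms(1-3)] by blast
  then show ?thesis using that coset_qI_self by metis
qed

lemma rep_L:
  assumes B: "B \<in> cls" and C: "C \<in> cls" and \<alpha>: "\<alpha> \<in> Alim G B C" and m: "m \<in> Wset G B" and N: "N \<in> Wset G C"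
  shows "\<exists>c\<in>lblock G (lideal m) C. c \<in> \<alpha> m N"
proof -
  obtain r where r: "\<alpha> m N = coset r (qI m N)" using Alim_coset[OF \<alpha> m N] by blast
  obtain c where c: "c \<in> lblock G (lideal m) C" "r - c \<in> qI m N" using surjL[OF B C m N, of r] by blast
  have "c - r \<in> qI m N" using qI_neg[OF c(2)] by simp
  then show ?thesis using c(1) r by auto
qed

lemma rep_R:
  assumes D: "D \<in> cls" and C: "C \<in> cls" and \<beta>: "\<beta> \<in> Alim G C D" and l: "l \<in> Wset G D" and N: "N \<in> Wset G C"
  shows "\<exists>d\<in>rblock G (rideal l) C. d \<in> \<beta> N l"
proof -
  obtain r where r: "\<beta> N l = coset r (qI N l)" using Alim_coset[OF \<beta> N l] by blast
  obtain d where d: "d \<in> rblock G (rideal l) C" "r - d \<in> qI N l" using surjR[OF D C l N, of r] by blast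
  have "d - r \<in> qI N l" using qI_neg[OF d(2)] by simp
  then show ?thesis using d(1) r by auto
qed

end

context HCL
begin

lemma valid_intro:
  assumes B: "B \<in> cls" and C: "C \<in> cls" and D: "D \<in> cls"
    and \<alpha>: "\<alpha> \<in> Alim G B C" and \<beta>: "\<beta> \<in> Alim G C D"
    and m: "m \<in> Wset G B" and l: "l \<in> Wset G D" and N: "N \<in> Wset G C"
    and kL: "killL m C N" and kR: "killR l C N"
    and c: "c \<in> lblock G (lideal m) C" "c \<in> \<alpha> m N"
    and d: "d \<in> rblock G (rideal l) C" "d \<in> \<beta> N l"
  shows "valid_choice G C m l \<alpha> \<beta> N c d"
proof -
  have 1: "\<forall>a. \<exists>a'\<in>rblock G (rideal l) C. a - a' \<in> qI N l" using surjR[OF D C l N] by blast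
  have 2: "\<forall>a'\<in>rblock G (rideal l) C. a' \<in> qI N l \<longrightarrow> a' \<in> rideal l" using injR[OF D C l N kR] by blast
  have 3: "\<forall>a. \<exists>a'\<in>lblock G (lideal m) C. a - a' \<in> qI m N" using surjL[OF B C m N] by blast
  have 4: "\<forall>a'\<in>lblock G (lideal m) C. a' \<in> qI m N \<longrightarrow> a' \<in> lideal m" using injL[OF B C m N kL] by blast
  have 5: "\<alpha> m N = coset c (qI m N)" using Alim_mem_coset[OF \<alpha> m N c(2)] .
  have 6: "\<beta> N l = coset d (qI N l)" using Alim_mem_coset[OF \<beta> N l d(2)] .
  show ?thesis unfolding valid_choice_def using N 1 2 3 4 5 6 c(1) d(1) by simp
qed

lemma valid_ex:
  assumes B: "B \<in> cls" and C: "C \<in> cls" and D: "D \<in> cls"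
    and \<alpha>: "\<alpha> \<in> Alim G B C" and \<beta>: "\<beta> \<in> Alim G C D"
    and m: "m \<in> Wset G B" and l: "l \<in> Wset G D"
  shows "\<exists>n a0 b0. valid_choice G C m l \<alpha> \<beta> n a0 b0"
proof -
  obtain n1 where n1: "n1 \<in> Wset G C" "killL m C n1" using killL_ex[OF B m C] by blast
  obtain n2 where n2: "n2 \<in> Wset G C" "killR l C n2" using killR_ex[OF D l C] by blast
  obtain N where N: "N \<in> Wset G C" "N \<subseteq> n1" "N \<subseteq> n2" using W_dir[OF C n1(1) n2(1)] by blast
  have kL: "killL m C N" using killL_mono[OF n1(2) N(2)] .
  have kR: "killR l C N" using killR_mono[OF n2(2) N(3)] .
  obtain c where c: "c \<in> lblock G (lideal m) C" "c \<in> \<alpha> m N" using rep_L[OF B C \<alpha> m N(1)] by blast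
  obtain d where d: "d \<in> rblock G (rideal l) C" "d \<in> \<beta> N l" using rep_R[OF D C \<beta> l N(1)] by blast
  show ?thesis using valid_intro[OF B C D \<alpha> \<beta> m l N(1) kL kR c d] by blast
qed

lemma Rep:
  assumes B: "B \<in> cls" and C: "C \<in> cls" and D: "D \<in> cls"
    and \<alpha>: "\<alpha> \<in> Alim G B C" and \<beta>: "\<beta> \<in> Alim G C D"
    and m: "m \<in> Wset G B" and l: "l \<in> Wset G D"
    and v: "valid_choice G C m l \<alpha> \<beta> n a0 b0"
    and N: "N \<in> Wset G C" "N \<subseteq> n"
    and c: "c \<in> \<alpha> m N" "c \<in> lblock G (lideal m) C" and d: "d \<in> \<beta> N l"
  shows "b0 * a0 - d * c \<in> qI m l"
proof -
  have n: "n \<in> Wset G C" by (rule valid_parts(1)[OF v])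
  have "\<alpha> m N \<subseteq> \<alpha> m n" using Alim_mono[OF \<alpha> m m N(1) n _ N(2)] by simp
  then have "c \<in> coset a0 (qI m n)" using c(1) valid_parts(4)[OF v] by auto
  then have ac: "a0 - c \<in> qI m n" using qI_neg[of "c - a0" m n] by simp
  have "\<beta> N l \<subseteq> \<beta> n l" using Alim_mono[OF \<beta> N(1) n l l N(2)] by simp
  then have "d \<in> coset b0 (qI n l)" using d valid_parts(6)[OF v] by auto
  then have bd: "b0 - d \<in> qI n l" using qI_neg[of "d - b0" n l] by simp
  have 1: "b0 * (a0 - c) \<in> qI m l" using killR_qI[OF valid_killR[OF v C] valid_parts(7)[OF v] ac] .
  have 2: "(b0 - d) * c \<in> qI m l" using killL_qI[OF valid_killL[OF v C] c(2) bd] .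
  have eq: "b0 * a0 - d * c = b0 * (a0 - c) + (b0 - d) * c" by (simp add: algebra_simps)
  show ?thesis unfolding eq using qI_add[OF 1 2] .
qed

lemma unique:
  assumes B: "B \<in> cls" and C: "C \<in> cls" and D: "D \<in> cls"
    and \<alpha>: "\<alpha> \<in> Alim G B C" and \<beta>: "\<beta> \<in> Alim G C D"
    and m: "m \<in> Wset G B" and l: "l \<in> Wset G D"
    and v: "valid_choice G C m l \<alpha> \<beta> n a0 b0" and v': "valid_choice G C m l \<alpha> \<beta> n' a0' b0'"
  shows "coset (b0 * a0) (qI m l) = coset (b0' * a0') (qI m l)"
proof -
  obtain N where N: "N \<in> Wset G C" "N \<subseteq> n" "N \<subseteq> n'"
    using W_dir[OF C valid_parts(1)[OF v] valid_parts(1)[OF v']] by blast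
  obtain c where c: "c \<in> lblock G (lideal m) C" "c \<in> \<alpha> m N" using rep_L[OF B C \<alpha> m N(1)] by blast
  obtain d where d: "d \<in> \<beta> N l" using Alim_ne[OF \<beta> N(1) l] by blast
  have 1: "b0 * a0 - d * c \<in> qI m l" using Rep[OF B C D \<alpha> \<beta> m l v N(1,2) c(2,1) d] .
  have 2: "b0' * a0' - d * c \<in> qI m l" using Rep[OF B C D \<alpha> \<beta> m l v' N(1,3) c(2,1) d] .
  have eq: "b0 * a0 - b0' * a0' = (b0 * a0 - d * c) - (b0' * a0' - d * c)" by simp
  show ?thesis by (rule coset_qI_eq) (unfold eq, rule qI_diff[OF 1 2])
qed

lemma hc_eq:
  assumes B: "B \<in> cls" and C: "C \<in> cls" and D: "D \<in> cls"
    and \<alpha>: "\<alpha> \<in> Alim G B C" and \<beta>: "\<beta> \<in> Alim G C D"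
    and m: "m \<in> Wset G B" and l: "l \<in> Wset G D"
    and v: "valid_choice G C m l \<alpha> \<beta> n a0 b0"
  shows "hc_comp G B C D \<beta> \<alpha> m l = coset (b0 * a0) (qI m l)"
proof -
  have "(THE X. \<exists>n a0 b0. valid_choice G C m l \<alpha> \<beta> n a0 b0 \<and> X = coset (b0 * a0) (qI m l)) = coset (b0 * a0) (qI m l)"
  proof (rule the_equality)
    show "\<exists>n' a0' b0'. valid_choice G C m l \<alpha> \<beta> n' a0' b0' \<and> coset (b0 * a0) (qI m l) = coset (b0' * a0') (qI m l)"
      using v by blast
  next
    fix X assume "\<exists>n' a0' b0'. valid_choice G C m l \<alpha> \<beta> n' a0' b0' \<and> X = coset (b0' * a0') (qI m l)"
    then obtain n' a0' b0' where "valid_choice G C m l \<alpha> \<beta> n' a0' b0'" "X = coset (b0' * a0') (qI m l)" by blast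
    then show "X = coset (b0 * a0) (qI m l)" using unique[OF B C D \<alpha> \<beta> m l v] by simp
  qed
  then show ?thesis unfolding hc_comp_def using m l by simp
qed

lemma Char1:
  assumes B: "B \<in> cls" and C: "C \<in> cls" and D: "D \<in> cls"
    and \<alpha>: "\<alpha> \<in> Alim G B C" and \<beta>: "\<beta> \<in> Alim G C D"
    and m: "m \<in> Wset G B" and l: "l \<in> Wset G D" and N: "N \<in> Wset G C"
    and kL: "killL m C N" and kR: "killR l C N"
    and c: "c \<in> lblock G (lideal m) C" "c \<in> \<alpha> m N" and d: "d \<in> \<beta> N l"
  shows "hc_comp G B C D \<beta> \<alpha> m l = coset (d * c) (qI m l)"
proof -
  obtain d' where d': "d' \<in> rblock G (rideal l) C" "d' \<in> \<beta> N l" using rep_R[OF D C \<beta> l N] by blast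
  have v: "valid_choice G C m l \<alpha> \<beta> N c d'" using valid_intro[OF B C D \<alpha> \<beta> m l N kL kR c d'] .
  have "d \<in> coset d' (qI N l)" using d Alim_mem_coset[OF \<beta> N l d'(2)] by simp
  then have "d' - d \<in> qI N l" using qI_neg[of "d - d'" N l] by simp
  then have "(d' - d) * c \<in> qI m l" using killL_qI[OF kL c(1)] by blast
  then have "d' * c - d * c \<in> qI m l" by (simp add: algebra_simps)
  then have "coset (d' * c) (qI m l) = coset (d * c) (qI m l)" by (rule coset_qI_eq)
  then show ?thesis using hc_eq[OF B C D \<alpha> \<beta> m l v] by simp
qed

lemma Char2:
  assumes B: "B \<in> cls" and C: "C \<in> cls" and D: "D \<in> cls"
    and \<alpha>: "\<alpha> \<in> Alim G B C" and \<beta>: "\<beta> \<in> Alim G C D"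
    and m: "m \<in> Wset G B" and l: "l \<in> Wset G D" and N: "N \<in> Wset G C"
    and kL: "killL m C N" and kR: "killR l C N"
    and d: "d \<in> rblock G (rideal l) C" "d \<in> \<beta> N l" and c: "c \<in> \<alpha> m N"
  shows "hc_comp G B C D \<beta> \<alpha> m l = coset (d * c) (qI m l)"
proof -
  obtain c' where c': "c' \<in> lblock G (lideal m) C" "c' \<in> \<alpha> m N" using rep_L[OF B C \<alpha> m N] by blast
  have v: "valid_choice G C m l \<alpha> \<beta> N c' d" using valid_intro[OF B C D \<alpha> \<beta> m l N kL kR c' d] .
  have "c \<in> coset c' (qI m N)" using c Alim_mem_coset[OF \<alpha> m N c'(2)] by simp
  then have "c' - c \<in> qI m N" using qI_neg[of "c - c'" m N] by simp
  then have "d * (c' - c) \<in> qI m l" using killR_qI[OF kR d(1)] by blast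
  then have "d * c' - d * c \<in> qI m l" by (simp add: algebra_simps)
  then have "coset (d * c') (qI m l) = coset (d * c) (qI m l)" by (rule coset_qI_eq)
  then show ?thesis using hc_eq[OF B C D \<alpha> \<beta> m l v] by simp
qed

lemma hc_out:
  assumes "\<not> (m \<in> Wset G B \<and> l \<in> Wset G D)" shows "hc_comp G B C D \<beta> \<alpha> m l = {}"
proof -
  have "\<not> (m \<in> Wset G B \<and> l \<in> Wset G D)" using assms .
  then show ?thesis unfolding hc_comp_def by (simp only: if_False)
qed

lemma good_ex:
  assumes B: "B \<in> cls" and C: "C \<in> cls" and D: "D \<in> cls"
    and m: "m \<in> Wset G B" and l: "l \<in> Wset G D" and n0: "n0 \<in> Wset G C"
  obtains N where "N \<in> Wset G C" "N \<subseteq> n0" "killL m C N" "killR l C N"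
proof -
  obtain n1 where n1: "n1 \<in> Wset G C" "killL m C n1" using killL_ex[OF B m C] by blast
  obtain n2 where n2: "n2 \<in> Wset G C" "killR l C n2" using killR_ex[OF D l C] by blast
  obtain N where N: "N \<in> Wset G C" "N \<subseteq> n1" "N \<subseteq> n2" "N \<subseteq> n0" using W_dir3[OF C n1(1) n2(1) n0] by blast
  show ?thesis using that[OF N(1) N(4) killL_mono[OF n1(2) N(2)] killR_mono[OF n2(2) N(3)]] .
qed

lemma hc_Alim:
  assumes B: "B \<in> cls" and C: "C \<in> cls" and D: "D \<in> cls"
    and \<alpha>: "\<alpha> \<in> Alim G B C" and \<beta>: "\<beta> \<in> Alim G C D"
  shows "hc_comp G B C D \<beta> \<alpha> \<in> Alim G B D"
proof -
  have 1: "\<forall>m n. m \<in> Wset G B \<and> n \<in> Wset G D \<longrightarrow> (\<exists>a. hc_comp G B C D \<beta> \<alpha> m n = coset a (qI m n))"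
  proof (intro allI impI)
    fix m l assume ml: "m \<in> Wset G B \<and> l \<in> Wset G D"
    then obtain n a0 b0 where "valid_choice G C m l \<alpha> \<beta> n a0 b0" using valid_ex[OF B C D \<alpha> \<beta>] by blast
    then show "\<exists>a. hc_comp G B C D \<beta> \<alpha> m l = coset a (qI m l)" using hc_eq[OF B C D \<alpha> \<beta>] ml by blast
  qed
  have 2: "\<forall>m m' n n'. m \<in> Wset G B \<longrightarrow> m' \<in> Wset G B \<longrightarrow> n \<in> Wset G D \<longrightarrow> n' \<in> Wset G D \<longrightarrow>
        m \<subseteq> m' \<longrightarrow> n \<subseteq> n' \<longrightarrow> hc_comp G B C D \<beta> \<alpha> m n \<subseteq> hc_comp G B C D \<beta> \<alpha> m' n'"
  proof (intro allI impI)
    fix m m' l l' assume m: "m \<in> Wset G B" and m': "m' \<in> Wset G B" and l: "l \<in> Wset G D" and l': "l' \<in> Wset G D"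
      and mm: "m \<subseteq> m'" and ll: "l \<subseteq> l'"
    obtain n1 where n1: "n1 \<in> Wset G C" "killL m C n1" using killL_ex[OF B m C] by blast
    obtain n2 where n2: "n2 \<in> Wset G C" "killR l C n2" using killR_ex[OF D l C] by blast
    obtain n3 where n3: "n3 \<in> Wset G C" "killL m' C n3" using killL_ex[OF B m' C] by blast
    obtain n4 where n4: "n4 \<in> Wset G C" "killR l' C n4" using killR_ex[OF D l' C] by blast
    obtain N where N: "N \<in> Wset G C" "N \<subseteq> n1" "N \<subseteq> n2" "N \<subseteq> n3" "N \<subseteq> n4"
      using W_dir4[OF C n1(1) n2(1) n3(1) n4(1)] by blast
    obtain c where c: "c \<in> lblock G (lideal m) C" "c \<in> \<alpha> m N" using rep_L[OF B C \<alpha> m N(1)] by blast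
    obtain d where d: "d \<in> \<beta> N l" using Alim_ne[OF \<beta> N(1) l] by blast
    have e1: "hc_comp G B C D \<beta> \<alpha> m l = coset (d * c) (qI m l)"
      using Char1[OF B C D \<alpha> \<beta> m l N(1) killL_mono[OF n1(2) N(2)] killR_mono[OF n2(2) N(3)] c d] .
    have c': "c \<in> lblock G (lideal m') C" using c(1) lblock_mono[OF mm] by blast
    have c'': "c \<in> \<alpha> m' N" using c(2) Alim_mono[OF \<alpha> m m' N(1) N(1) mm] by blast
    have d': "d \<in> \<beta> N l'" using d Alim_mono[OF \<beta> N(1) N(1) l l' _ ll] by blast
    have e2: "hc_comp G B C D \<beta> \<alpha> m' l' = coset (d * c) (qI m' l')"
      using Char1[OF B C D \<alpha> \<beta> m' l' N(1) killL_mono[OF n3(2) N(4)] killR_mono[OF n4(2) N(5)] c' c'' d'] .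
    show "hc_comp G B C D \<beta> \<alpha> m l \<subseteq> hc_comp G B C D \<beta> \<alpha> m' l'"
      unfolding e1 e2 using qI_mono[OF mm ll] by auto
  qed
  have 3: "\<forall>m n. \<not> (m \<in> Wset G B \<and> n \<in> Wset G D) \<longrightarrow> hc_comp G B C D \<beta> \<alpha> m n = {}"
    using hc_out by blast
  show ?thesis unfolding Alim_def using 1 2 3 by blast
qed

end

lemma lim_add_val:
  assumes "\<alpha> m n = coset a (qI m n)" "\<beta> m n = coset b (qI m n)"
  shows "lim_add \<alpha> \<beta> m n = coset (a + b) (qI m n)"
proof -
  have "y \<in> lim_add \<alpha> \<beta> m n \<longleftrightarrow> y - (a + b) \<in> qI m n" for y
  proof
    assume "y \<in> lim_add \<alpha> \<beta> m n"
    then obtain x z where xz: "x - a \<in> qI m n" "z - b \<in> qI m n" "y - (x + z) \<in> qI m n"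
      unfolding lim_add_def using assms by auto
    have eq: "y - (a + b) = (y - (x + z)) + ((x - a) + (z - b))" by (simp add: algebra_simps)
    show "y - (a + b) \<in> qI m n" unfolding eq using qI_add[OF xz(3) qI_add[OF xz(1,2)]] .
  next
    assume "y - (a + b) \<in> qI m n"
    moreover have "a \<in> \<alpha> m n" "b \<in> \<beta> m n" using assms coset_qI_self by auto
    ultimately show "y \<in> lim_add \<alpha> \<beta> m n" unfolding lim_add_def by blast
  qed
  then show ?thesis by auto
qed

lemma lim_add_out: "\<alpha> m n = {} \<Longrightarrow> lim_add \<alpha> \<beta> m n = {}"
  unfolding lim_add_def by simp

lemma lim_lmult_val:
  assumes g: "\<And>x. x \<in> n \<Longrightarrow> g * x \<in> n" and "\<alpha> m n = coset a (qI m n)"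
  shows "lim_lmult g \<alpha> m n = coset (g * a) (qI m n)"
proof -
  have "y \<in> lim_lmult g \<alpha> m n \<longleftrightarrow> y - g * a \<in> qI m n" for y
  proof
    assume "y \<in> lim_lmult g \<alpha> m n"
    then obtain x where x: "x - a \<in> qI m n" "y - g * x \<in> qI m n"
      unfolding lim_lmult_def using assms(2) by auto
    have eq: "y - g * a = (y - g * x) + g * (x - a)" by (simp add: algebra_simps)
    show "y - g * a \<in> qI m n" unfolding eq using qI_add[OF x(2) qI_lmult[OF g x(1)]] .
  next
    assume "y - g * a \<in> qI m n"
    moreover have "a \<in> \<alpha> m n" using assms(2) coset_qI_self by auto
    ultimately show "y \<in> lim_lmult g \<alpha> m n" unfolding lim_lmult_def by blast
  qed
  then show ?thesis by auto
qed

lemma lim_lmult_out: "\<alpha> m n = {} \<Longrightarrow> lim_lmult g \<alpha> m n = {}"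
  unfolding lim_lmult_def by simp

lemma lim_rmult_val:
  assumes g: "\<And>x. x \<in> m \<Longrightarrow> x * g \<in> m" and "\<alpha> m n = coset a (qI m n)"
  shows "lim_rmult \<alpha> g m n = coset (a * g) (qI m n)"
proof -
  have "y \<in> lim_rmult \<alpha> g m n \<longleftrightarrow> y - a * g \<in> qI m n" for y
  proof
    assume "y \<in> lim_rmult \<alpha> g m n"
    then obtain x where x: "x - a \<in> qI m n" "y - x * g \<in> qI m n"
      unfolding lim_rmult_def using assms(2) by auto
    have eq: "y - a * g = (y - x * g) + (x - a) * g" by (simp add: algebra_simps)
    show "y - a * g \<in> qI m n" unfolding eq using qI_add[OF x(2) qI_rmult[OF g x(1)]] .
  next
    assume "y - a * g \<in> qI m n"
    moreover have "a \<in> \<alpha> m n" using assms(2) coset_qI_self by auto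
    ultimately show "y \<in> lim_rmult \<alpha> g m n" unfolding lim_rmult_def by blast
  qed
  then show ?thesis by auto
qed

lemma lim_rmult_out: "\<alpha> m n = {} \<Longrightarrow> lim_rmult \<alpha> g m n = {}"
  unfolding lim_rmult_def by simp

context HCL
begin

lemma lim_of_val: "m \<in> Wset G B \<Longrightarrow> n \<in> Wset G C \<Longrightarrow> lim_of G B C g m n = coset g (qI m n)"
  unfolding lim_of_def by simp
lemma lim_of_out: assumes "\<not> (m \<in> Wset G B \<and> n \<in> Wset G C)" shows "lim_of G B C g m n = {}"
proof -
  have "\<not> (m \<in> Wset G B \<and> n \<in> Wset G C)" using assms .
  then show ?thesis unfolding lim_of_def by (simp only: if_False)
qed

lemma Alim_intro:
  assumes "\<And>m n. m \<in> Wset G B \<Longrightarrow> n \<in> Wset G C \<Longrightarrow> \<exists>a. \<alpha> m n = coset a (qI m n)"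
    "\<And>m m' n n'. m \<in> Wset G B \<Longrightarrow> m' \<in> Wset G B \<Longrightarrow> n \<in> Wset G C \<Longrightarrow> n' \<in> Wset G C \<Longrightarrow>
        m \<subseteq> m' \<Longrightarrow> n \<subseteq> n' \<Longrightarrow> \<alpha> m n \<subseteq> \<alpha> m' n'"
    "\<And>m n. \<not> (m \<in> Wset G B \<and> n \<in> Wset G C) \<Longrightarrow> \<alpha> m n = {}"
  shows "\<alpha> \<in> Alim G B C"
  unfolding Alim_def using assms by simp

lemma of_Alim: "lim_of G B C g \<in> Alim G B C"
proof (rule Alim_intro)
  fix m m' n n' assume "m \<in> Wset G B" "m' \<in> Wset G B" "n \<in> Wset G C" "n' \<in> Wset G C" "m \<subseteq> m'" "n \<subseteq> n'"
  then show "lim_of G B C g m n \<subseteq> lim_of G B C g m' n'"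
    using lim_of_val qI_mono[of m m' n n'] by auto
qed (auto simp: lim_of_val lim_of_out)

lemma add_Alim:
  assumes B: "B \<in> cls" and C: "C \<in> cls" and \<alpha>: "\<alpha> \<in> Alim G B C" and \<alpha>': "\<alpha>' \<in> Alim G B C"
  shows "lim_add \<alpha> \<alpha>' \<in> Alim G B C"
proof (rule Alim_intro)
  fix m n assume m: "m \<in> Wset G B" and n: "n \<in> Wset G C"
  obtain a where "a \<in> \<alpha> m n" using Alim_ne[OF \<alpha> m n] by blast
  moreover obtain a' where "a' \<in> \<alpha>' m n" using Alim_ne[OF \<alpha>' m n] by blast
  ultimately show "\<exists>a. lim_add \<alpha> \<alpha>' m n = coset a (qI m n)"
    using lim_add_val Alim_mem_coset[OF \<alpha> m n] Alim_mem_coset[OF \<alpha>' m n] by metis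
next
  fix m m' n n' assume m: "m \<in> Wset G B" and m': "m' \<in> Wset G B" and n: "n \<in> Wset G C" and n': "n' \<in> Wset G C"
    and mm: "m \<subseteq> m'" and nn: "n \<subseteq> n'"
  obtain a where a: "a \<in> \<alpha> m n" using Alim_ne[OF \<alpha> m n] by blast
  obtain a' where a': "a' \<in> \<alpha>' m n" using Alim_ne[OF \<alpha>' m n] by blast
  have b: "a \<in> \<alpha> m' n'" "a' \<in> \<alpha>' m' n'" using a a' Alim_mono[OF \<alpha> m m' n n' mm nn] Alim_mono[OF \<alpha>' m m' n n' mm nn] by auto
  have e1: "lim_add \<alpha> \<alpha>' m n = coset (a + a') (qI m n)"
    using lim_add_val Alim_mem_coset[OF \<alpha> m n a] Alim_mem_coset[OF \<alpha>' m n a'] by metis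
  have e2: "lim_add \<alpha> \<alpha>' m' n' = coset (a + a') (qI m' n')"
    using lim_add_val Alim_mem_coset[OF \<alpha> m' n' b(1)] Alim_mem_coset[OF \<alpha>' m' n' b(2)] by metis
  show "lim_add \<alpha> \<alpha>' m n \<subseteq> lim_add \<alpha> \<alpha>' m' n'" unfolding e1 e2 using qI_mono[OF mm nn] by auto
next
  fix m n assume "\<not> (m \<in> Wset G B \<and> n \<in> Wset G C)"
  then show "lim_add \<alpha> \<alpha>' m n = {}" using lim_add_out Alim_out[OF \<alpha>] by metis
qed

lemma lmult_Alim:
  assumes B: "B \<in> cls" and C: "C \<in> cls" and \<alpha>: "\<alpha> \<in> Alim G B C" and g: "g \<in> G"
  shows "lim_lmult g \<alpha> \<in> Alim G B C"
proof (rule Alim_intro)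
  fix m n assume m: "m \<in> Wset G B" and n: "n \<in> Wset G C"
  have gn: "\<And>x. x \<in> n \<Longrightarrow> g * x \<in> n" using tsi_lmul[OF tsi_W[OF n C] g] .
  obtain a where "a \<in> \<alpha> m n" using Alim_ne[OF \<alpha> m n] by blast
  then show "\<exists>a. lim_lmult g \<alpha> m n = coset a (qI m n)"
    using lim_lmult_val[of n g \<alpha> m, OF gn] Alim_mem_coset[OF \<alpha> m n] by metis
next
  fix m m' n n' assume m: "m \<in> Wset G B" and m': "m' \<in> Wset G B" and n: "n \<in> Wset G C" and n': "n' \<in> Wset G C"
    and mm: "m \<subseteq> m'" and nn: "n \<subseteq> n'"
  have gn: "\<And>x. x \<in> n \<Longrightarrow> g * x \<in> n" using tsi_lmul[OF tsi_W[OF n C] g] .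
  have gn': "\<And>x. x \<in> n' \<Longrightarrow> g * x \<in> n'" using tsi_lmul[OF tsi_W[OF n' C] g] .
  obtain a where a: "a \<in> \<alpha> m n" using Alim_ne[OF \<alpha> m n] by blast
  have b: "a \<in> \<alpha> m' n'" using a Alim_mono[OF \<alpha> m m' n n' mm nn] by auto
  have e1: "lim_lmult g \<alpha> m n = coset (g * a) (qI m n)"
    using lim_lmult_val[of n g \<alpha> m, OF gn Alim_mem_coset[OF \<alpha> m n a]] .
  have e2: "lim_lmult g \<alpha> m' n' = coset (g * a) (qI m' n')"
    using lim_lmult_val[of n' g \<alpha> m', OF gn' Alim_mem_coset[OF \<alpha> m' n' b]] .
  show "lim_lmult g \<alpha> m n \<subseteq> lim_lmult g \<alpha> m' n'" unfolding e1 e2 using qI_mono[OF mm nn] by auto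
next
  fix m n assume "\<not> (m \<in> Wset G B \<and> n \<in> Wset G C)"
  then show "lim_lmult g \<alpha> m n = {}" using lim_lmult_out Alim_out[OF \<alpha>] by metis
qed

lemma rmult_Alim:
  assumes B: "B \<in> cls" and C: "C \<in> cls" and \<alpha>: "\<alpha> \<in> Alim G B C" and g: "g \<in> G"
  shows "lim_rmult \<alpha> g \<in> Alim G B C"
proof (rule Alim_intro)
  fix m n assume m: "m \<in> Wset G B" and n: "n \<in> Wset G C"
  have gm: "\<And>x. x \<in> m \<Longrightarrow> x * g \<in> m" using tsi_rmul[OF tsi_W[OF m B] g] .
  obtain a where "a \<in> \<alpha> m n" using Alim_ne[OF \<alpha> m n] by blast
  then show "\<exists>a. lim_rmult \<alpha> g m n = coset a (qI m n)"
    using lim_rmult_val[of m g \<alpha> n, OF gm] Alim_mem_coset[OF \<alpha> m n] by metis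
next
  fix m m' n n' assume m: "m \<in> Wset G B" and m': "m' \<in> Wset G B" and n: "n \<in> Wset G C" and n': "n' \<in> Wset G C"
    and mm: "m \<subseteq> m'" and nn: "n \<subseteq> n'"
  have gm: "\<And>x. x \<in> m \<Longrightarrow> x * g \<in> m" using tsi_rmul[OF tsi_W[OF m B] g] .
  have gm': "\<And>x. x \<in> m' \<Longrightarrow> x * g \<in> m'" using tsi_rmul[OF tsi_W[OF m' B] g] .
  obtain a where a: "a \<in> \<alpha> m n" using Alim_ne[OF \<alpha> m n] by blast
  have b: "a \<in> \<alpha> m' n'" using a Alim_mono[OF \<alpha> m m' n n' mm nn] by auto
  have e1: "lim_rmult \<alpha> g m n = coset (a * g) (qI m n)"
    using lim_rmult_val[of m g \<alpha> n, OF gm Alim_mem_coset[OF \<alpha> m n a]] .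
  have e2: "lim_rmult \<alpha> g m' n' = coset (a * g) (qI m' n')"
    using lim_rmult_val[of m' g \<alpha> n', OF gm' Alim_mem_coset[OF \<alpha> m' n' b]] .
  show "lim_rmult \<alpha> g m n \<subseteq> lim_rmult \<alpha> g m' n'" unfolding e1 e2 using qI_mono[OF mm nn] by auto
next
  fix m n assume "\<not> (m \<in> Wset G B \<and> n \<in> Wset G C)"
  then show "lim_rmult \<alpha> g m n = {}" using lim_rmult_out Alim_out[OF \<alpha>] by metis
qed

lemma rmult_one: "\<alpha> \<in> Alim G B C \<Longrightarrow> lim_rmult \<alpha> 1 = \<alpha>"
proof (intro ext)
  fix m n assume \<alpha>: "\<alpha> \<in> Alim G B C"
  show "lim_rmult \<alpha> 1 m n = \<alpha> m n"
  proof (cases "m \<in> Wset G B \<and> n \<in> Wset G C")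
    case True
    then obtain a where a: "\<alpha> m n = coset a (qI m n)" using Alim_coset[OF \<alpha>] by blast
    show ?thesis using lim_rmult_val[of m 1 \<alpha> n a] a by simp
  next
    case False then show ?thesis using Alim_out[OF \<alpha> False] lim_rmult_out by metis
  qed
qed

lemma lmult_one: "\<alpha> \<in> Alim G B C \<Longrightarrow> lim_lmult 1 \<alpha> = \<alpha>"
proof (intro ext)
  fix m n assume \<alpha>: "\<alpha> \<in> Alim G B C"
  show "lim_lmult 1 \<alpha> m n = \<alpha> m n"
  proof (cases "m \<in> Wset G B \<and> n \<in> Wset G C")
    case True
    then obtain a where a: "\<alpha> m n = coset a (qI m n)" using Alim_coset[OF \<alpha>] by blast
    show ?thesis using lim_lmult_val[of n 1 \<alpha> m a] a by simp
  next
    case False then show ?thesis using Alim_out[OF \<alpha> False] lim_lmult_out by metis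
  qed
qed

end

context HCL
begin

lemma comp_add1:
  assumes B: "B \<in> cls" and C: "C \<in> cls" and D: "D \<in> cls"
    and \<alpha>: "\<alpha> \<in> Alim G B C" and \<alpha>': "\<alpha>' \<in> Alim G B C" and \<beta>: "\<beta> \<in> Alim G C D"
  shows "hc_comp G B C D \<beta> (lim_add \<alpha> \<alpha>') = lim_add (hc_comp G B C D \<beta> \<alpha>) (hc_comp G B C D \<beta> \<alpha>')"
proof (intro ext)
  fix m l
  show "hc_comp G B C D \<beta> (lim_add \<alpha> \<alpha>') m l = lim_add (hc_comp G B C D \<beta> \<alpha>) (hc_comp G B C D \<beta> \<alpha>') m l"
  proof (cases "m \<in> Wset G B \<and> l \<in> Wset G D")
    case True
    then have m: "m \<in> Wset G B" and l: "l \<in> Wset G D" by auto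
    obtain N where N: "N \<in> Wset G C" "killL m C N" "killR l C N"
      using good_ex[OF B C D m l Wset.W_one] by metis
    obtain c where c: "c \<in> lblock G (lideal m) C" "c \<in> \<alpha> m N" using rep_L[OF B C \<alpha> m N(1)] by blast
    obtain c' where c': "c' \<in> lblock G (lideal m) C" "c' \<in> \<alpha>' m N" using rep_L[OF B C \<alpha>' m N(1)] by blast
    obtain d where d: "d \<in> \<beta> N l" using Alim_ne[OF \<beta> N(1) l] by blast
    have s: "lim_add \<alpha> \<alpha>' m N = coset (c + c') (qI m N)"
      by (rule lim_add_val[of \<alpha> m N c \<alpha>' c', OF Alim_mem_coset[OF \<alpha> m N(1) c(2)] Alim_mem_coset[OF \<alpha>' m N(1) c'(2)]])
    have cc: "c + c' \<in> lim_add \<alpha> \<alpha>' m N" unfolding s by (rule coset_qI_self)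
    have "hc_comp G B C D \<beta> (lim_add \<alpha> \<alpha>') m l = coset (d * (c + c')) (qI m l)"
      by (rule Char1[OF B C D add_Alim[OF B C \<alpha> \<alpha>'] \<beta> m l N lblock_add[OF C c(1) c'(1)] cc d])
    moreover have h1: "hc_comp G B C D \<beta> \<alpha> m l = coset (d * c) (qI m l)"
      by (rule Char1[OF B C D \<alpha> \<beta> m l N c d])
    moreover have h2: "hc_comp G B C D \<beta> \<alpha>' m l = coset (d * c') (qI m l)"
      by (rule Char1[OF B C D \<alpha>' \<beta> m l N c' d])
    moreover have "lim_add (hc_comp G B C D \<beta> \<alpha>) (hc_comp G B C D \<beta> \<alpha>') m l = coset (d * c + d * c') (qI m l)"
      by (rule lim_add_val[of "hc_comp G B C D \<beta> \<alpha>" m l "d * c" "hc_comp G B C D \<beta> \<alpha>'" "d * c'", OF h1 h2])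
    ultimately show ?thesis by (simp add: distrib_left)
  next
    case False
    then show ?thesis using hc_out lim_add_out by metis
  qed
qed

lemma comp_add2:
  assumes B: "B \<in> cls" and C: "C \<in> cls" and D: "D \<in> cls"
    and \<alpha>: "\<alpha> \<in> Alim G B C" and \<beta>: "\<beta> \<in> Alim G C D" and \<beta>': "\<beta>' \<in> Alim G C D"
  shows "hc_comp G B C D (lim_add \<beta> \<beta>') \<alpha> = lim_add (hc_comp G B C D \<beta> \<alpha>) (hc_comp G B C D \<beta>' \<alpha>)"
proof (intro ext)
  fix m l
  show "hc_comp G B C D (lim_add \<beta> \<beta>') \<alpha> m l = lim_add (hc_comp G B C D \<beta> \<alpha>) (hc_comp G B C D \<beta>' \<alpha>) m l"
  proof (cases "m \<in> Wset G B \<and> l \<in> Wset G D")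
    case True
    then have m: "m \<in> Wset G B" and l: "l \<in> Wset G D" by auto
    obtain N where N: "N \<in> Wset G C" "killL m C N" "killR l C N"
      using good_ex[OF B C D m l Wset.W_one] by metis
    obtain c where c: "c \<in> lblock G (lideal m) C" "c \<in> \<alpha> m N" using rep_L[OF B C \<alpha> m N(1)] by blast
    obtain d where d: "d \<in> \<beta> N l" using Alim_ne[OF \<beta> N(1) l] by blast
    obtain d' where d': "d' \<in> \<beta>' N l" using Alim_ne[OF \<beta>' N(1) l] by blast
    have s: "lim_add \<beta> \<beta>' N l = coset (d + d') (qI N l)"
      by (rule lim_add_val[of \<beta> N l d \<beta>' d', OF Alim_mem_coset[OF \<beta> N(1) l d] Alim_mem_coset[OF \<beta>' N(1) l d']])
    have dd: "d + d' \<in> lim_add \<beta> \<beta>' N l" unfolding s by (rule coset_qI_self)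
    have "hc_comp G B C D (lim_add \<beta> \<beta>') \<alpha> m l = coset ((d + d') * c) (qI m l)"
      by (rule Char1[OF B C D \<alpha> add_Alim[OF C D \<beta> \<beta>'] m l N c dd])
    moreover have h1: "hc_comp G B C D \<beta> \<alpha> m l = coset (d * c) (qI m l)"
      by (rule Char1[OF B C D \<alpha> \<beta> m l N c d])
    moreover have h2: "hc_comp G B C D \<beta>' \<alpha> m l = coset (d' * c) (qI m l)"
      by (rule Char1[OF B C D \<alpha> \<beta>' m l N c d'])
    moreover have "lim_add (hc_comp G B C D \<beta> \<alpha>) (hc_comp G B C D \<beta>' \<alpha>) m l = coset (d * c + d' * c) (qI m l)"
      by (rule lim_add_val[of "hc_comp G B C D \<beta> \<alpha>" m l "d * c" "hc_comp G B C D \<beta>' \<alpha>" "d' * c", OF h1 h2])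
    ultimately show ?thesis by (simp add: distrib_right)
  next
    case False
    then show ?thesis using hc_out lim_add_out by metis
  qed
qed

lemma comp_bal:
  assumes B: "B \<in> cls" and C: "C \<in> cls" and D: "D \<in> cls"
    and \<alpha>: "\<alpha> \<in> Alim G B C" and \<beta>: "\<beta> \<in> Alim G C D" and g: "g \<in> G"
  shows "hc_comp G B C D (lim_rmult \<beta> g) \<alpha> = hc_comp G B C D \<beta> (lim_lmult g \<alpha>)"
proof (intro ext)
  fix m l
  show "hc_comp G B C D (lim_rmult \<beta> g) \<alpha> m l = hc_comp G B C D \<beta> (lim_lmult g \<alpha>) m l"
  proof (cases "m \<in> Wset G B \<and> l \<in> Wset G D")
    case True
    then have m: "m \<in> Wset G B" and l: "l \<in> Wset G D" by auto
    obtain N where N: "N \<in> Wset G C" "killL m C N" "killR l C N"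
      using good_ex[OF B C D m l Wset.W_one] by metis
    obtain c where c: "c \<in> lblock G (lideal m) C" "c \<in> \<alpha> m N" using rep_L[OF B C \<alpha> m N(1)] by blast
    obtain d where d: "d \<in> \<beta> N l" using Alim_ne[OF \<beta> N(1) l] by blast
    have gN1: "\<And>x. x \<in> N \<Longrightarrow> x * g \<in> N" using tsi_rmul[OF tsi_W[OF N(1) C] g] .
    have gN2: "\<And>x. x \<in> N \<Longrightarrow> g * x \<in> N" using tsi_lmul[OF tsi_W[OF N(1) C] g] .
    have s1: "lim_rmult \<beta> g N l = coset (d * g) (qI N l)"
      by (rule lim_rmult_val[of N g \<beta> l, OF gN1 Alim_mem_coset[OF \<beta> N(1) l d]])
    have s2: "lim_lmult g \<alpha> m N = coset (g * c) (qI m N)"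
      by (rule lim_lmult_val[of N g \<alpha> m, OF gN2 Alim_mem_coset[OF \<alpha> m N(1) c(2)]])
    have dg: "d * g \<in> lim_rmult \<beta> g N l" unfolding s1 by (rule coset_qI_self)
    have gc: "g * c \<in> lim_lmult g \<alpha> m N" unfolding s2 by (rule coset_qI_self)
    have "hc_comp G B C D (lim_rmult \<beta> g) \<alpha> m l = coset ((d * g) * c) (qI m l)"
      by (rule Char1[OF B C D \<alpha> rmult_Alim[OF C D \<beta> g] m l N c dg])
    moreover have "hc_comp G B C D \<beta> (lim_lmult g \<alpha>) m l = coset (d * (g * c)) (qI m l)"
      by (rule Char1[OF B C D lmult_Alim[OF B C \<alpha> g] \<beta> m l N lblock_lmult[OF C g c(1)] gc d])
    ultimately show ?thesis by (simp add: mult.assoc)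
  next
    case False
    then show ?thesis using hc_out by metis
  qed
qed

lemma comp_lm:
  assumes B: "B \<in> cls" and C: "C \<in> cls" and D: "D \<in> cls"
    and \<alpha>: "\<alpha> \<in> Alim G B C" and \<beta>: "\<beta> \<in> Alim G C D" and g: "g \<in> G"
  shows "hc_comp G B C D (lim_lmult g \<beta>) \<alpha> = lim_lmult g (hc_comp G B C D \<beta> \<alpha>)"
proof (intro ext)
  fix m l
  show "hc_comp G B C D (lim_lmult g \<beta>) \<alpha> m l = lim_lmult g (hc_comp G B C D \<beta> \<alpha>) m l"
  proof (cases "m \<in> Wset G B \<and> l \<in> Wset G D")
    case True
    then have m: "m \<in> Wset G B" and l: "l \<in> Wset G D" by auto
    obtain N where N: "N \<in> Wset G C" "killL m C N" "killR l C N"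
      using good_ex[OF B C D m l Wset.W_one] by metis
    obtain c where c: "c \<in> lblock G (lideal m) C" "c \<in> \<alpha> m N" using rep_L[OF B C \<alpha> m N(1)] by blast
    obtain d where d: "d \<in> \<beta> N l" using Alim_ne[OF \<beta> N(1) l] by blast
    have gl: "\<And>x. x \<in> l \<Longrightarrow> g * x \<in> l" using tsi_lmul[OF tsi_W[OF l D] g] .
    have s1: "lim_lmult g \<beta> N l = coset (g * d) (qI N l)"
      by (rule lim_lmult_val[of l g \<beta> N, OF gl Alim_mem_coset[OF \<beta> N(1) l d]])
    have gd: "g * d \<in> lim_lmult g \<beta> N l" unfolding s1 by (rule coset_qI_self)
    have "hc_comp G B C D (lim_lmult g \<beta>) \<alpha> m l = coset ((g * d) * c) (qI m l)"
      by (rule Char1[OF B C D \<alpha> lmult_Alim[OF C D \<beta> g] m l N c gd])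
    moreover have h: "hc_comp G B C D \<beta> \<alpha> m l = coset (d * c) (qI m l)"
      by (rule Char1[OF B C D \<alpha> \<beta> m l N c d])
    moreover have "lim_lmult g (hc_comp G B C D \<beta> \<alpha>) m l = coset (g * (d * c)) (qI m l)"
      by (rule lim_lmult_val[of l g "hc_comp G B C D \<beta> \<alpha>" m, OF gl h])
    ultimately show ?thesis by (simp add: mult.assoc)
  next
    case False
    then show ?thesis using hc_out lim_lmult_out by metis
  qed
qed

lemma comp_rm:
  assumes B: "B \<in> cls" and C: "C \<in> cls" and D: "D \<in> cls"
    and \<alpha>: "\<alpha> \<in> Alim G B C" and \<beta>: "\<beta> \<in> Alim G C D" and g: "g \<in> G"
  shows "hc_comp G B C D \<beta> (lim_rmult \<alpha> g) = lim_rmult (hc_comp G B C D \<beta> \<alpha>) g"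
proof (intro ext)
  fix m l
  show "hc_comp G B C D \<beta> (lim_rmult \<alpha> g) m l = lim_rmult (hc_comp G B C D \<beta> \<alpha>) g m l"
  proof (cases "m \<in> Wset G B \<and> l \<in> Wset G D")
    case True
    then have m: "m \<in> Wset G B" and l: "l \<in> Wset G D" by auto
    obtain N where N: "N \<in> Wset G C" "killL m C N" "killR l C N"
      using good_ex[OF B C D m l Wset.W_one] by metis
    obtain d where d: "d \<in> rblock G (rideal l) C" "d \<in> \<beta> N l" using rep_R[OF D C \<beta> l N(1)] by blast
    obtain c where c: "c \<in> \<alpha> m N" using Alim_ne[OF \<alpha> m N(1)] by blast
    have gm: "\<And>x. x \<in> m \<Longrightarrow> x * g \<in> m" using tsi_rmul[OF tsi_W[OF m B] g] .
    have s1: "lim_rmult \<alpha> g m N = coset (c * g) (qI m N)"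
      by (rule lim_rmult_val[of m g \<alpha> N, OF gm Alim_mem_coset[OF \<alpha> m N(1) c]])
    have cg: "c * g \<in> lim_rmult \<alpha> g m N" unfolding s1 by (rule coset_qI_self)
    have "hc_comp G B C D \<beta> (lim_rmult \<alpha> g) m l = coset (d * (c * g)) (qI m l)"
      by (rule Char2[OF B C D rmult_Alim[OF B C \<alpha> g] \<beta> m l N d cg])
    moreover have h: "hc_comp G B C D \<beta> \<alpha> m l = coset (d * c) (qI m l)"
      by (rule Char2[OF B C D \<alpha> \<beta> m l N d c])
    moreover have "lim_rmult (hc_comp G B C D \<beta> \<alpha>) g m l = coset ((d * c) * g) (qI m l)"
      by (rule lim_rmult_val[of m g "hc_comp G B C D \<beta> \<alpha>" l, OF gm h])
    ultimately show ?thesis by (simp add: mult.assoc)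
  next
    case False
    then show ?thesis using hc_out lim_rmult_out by metis
  qed
qed

end

context HCL
begin

lemma comp_assoc:
  assumes B: "B \<in> cls" and C: "C \<in> cls" and D: "D \<in> cls" and E: "E \<in> cls"
    and \<alpha>: "\<alpha> \<in> Alim G B C" and \<beta>: "\<beta> \<in> Alim G C D" and \<delta>: "\<delta> \<in> Alim G D E"
  shows "hc_comp G B D E \<delta> (hc_comp G B C D \<beta> \<alpha>) = hc_comp G B C E (hc_comp G C D E \<delta> \<beta>) \<alpha>"
proof (intro ext)
  fix m e
  show "hc_comp G B D E \<delta> (hc_comp G B C D \<beta> \<alpha>) m e = hc_comp G B C E (hc_comp G C D E \<delta> \<beta>) \<alpha> m e"
  proof (cases "m \<in> Wset G B \<and> e \<in> Wset G E")
    case True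
    then have m: "m \<in> Wset G B" and e: "e \<in> Wset G E" by auto
    have X: "hc_comp G B C D \<beta> \<alpha> \<in> Alim G B D" by (rule hc_Alim[OF B C D \<alpha> \<beta>])
    have Y: "hc_comp G C D E \<delta> \<beta> \<in> Alim G C E" by (rule hc_Alim[OF C D E \<beta> \<delta>])
    obtain N0 where N0: "N0 \<in> Wset G C" "killL m C N0" "killR e C N0"
      using good_ex[OF B C E m e Wset.W_one] by metis
    obtain p1 where p1: "p1 \<in> Wset G D" "killL m D p1" using killL_ex[OF B m D] by blast
    obtain p2 where p2: "p2 \<in> Wset G D" "killR e D p2" using killR_ex[OF E e D] by blast
    obtain p3 where p3: "p3 \<in> Wset G D" "killL N0 D p3" using killL_ex[OF C N0(1) D] by blast
    obtain P where P: "P \<in> Wset G D" "P \<subseteq> p1" "P \<subseteq> p2" "P \<subseteq> p3" using W_dir3[OF D p1(1) p2(1) p3(1)] by blast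
    have kP1: "killL m D P" using killL_mono[OF p1(2) P(2)] .
    have kP2: "killR e D P" using killR_mono[OF p2(2) P(3)] .
    have kP3: "killL N0 D P" using killL_mono[OF p3(2) P(4)] .
    obtain n' where n': "n' \<in> Wset G C" "killR P C n'" using killR_ex[OF D P(1) C] by blast
    obtain N where N: "N \<in> Wset G C" "N \<subseteq> N0" "N \<subseteq> n'" using W_dir[OF C N0(1) n'(1)] by blast
    have kN1: "killL m C N" using killL_mono[OF N0(2) N(2)] .
    have kN2: "killR P C N" using killR_mono[OF n'(2) N(3)] .
    obtain c where c: "c \<in> lblock G (lideal m) C" "c \<in> \<alpha> m N" using rep_L[OF B C \<alpha> m N(1)] by blast
    obtain d where d: "d \<in> \<beta> N P" using Alim_ne[OF \<beta> N(1) P(1)] by blast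
    obtain f where f: "f \<in> rblock G (rideal e) D" "f \<in> \<delta> P e" using rep_R[OF E D \<delta> e P(1)] by blast
    have XmP: "hc_comp G B C D \<beta> \<alpha> m P = coset (d * c) (qI m P)"
      by (rule Char1[OF B C D \<alpha> \<beta> m P(1) N(1) kN1 kN2 c d])
    have dc: "d * c \<in> hc_comp G B C D \<beta> \<alpha> m P" unfolding XmP by (rule coset_qI_self)
    have L: "hc_comp G B D E \<delta> (hc_comp G B C D \<beta> \<alpha>) m e = coset (f * (d * c)) (qI m e)"
      by (rule Char2[OF B D E X \<delta> m e P(1) kP1 kP2 f dc])
    have d0: "d \<in> \<beta> N0 P" using d Alim_mono[OF \<beta> N(1) N0(1) P(1) P(1) N(2)] by blast
    have YN0: "hc_comp G C D E \<delta> \<beta> N0 e = coset (f * d) (qI N0 e)"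
      by (rule Char2[OF C D E \<beta> \<delta> N0(1) e P(1) kP3 kP2 f d0])
    have fd: "f * d \<in> hc_comp G C D E \<delta> \<beta> N0 e" unfolding YN0 by (rule coset_qI_self)
    have c0: "c \<in> \<alpha> m N0" using c(2) Alim_mono[OF \<alpha> m m N(1) N0(1) _ N(2)] by blast
    have R: "hc_comp G B C E (hc_comp G C D E \<delta> \<beta>) \<alpha> m e = coset ((f * d) * c) (qI m e)"
      by (rule Char1[OF B C E \<alpha> Y m e N0(1) N0(2) N0(3) c(1) c0 fd])
    show ?thesis unfolding L R by (simp add: mult.assoc)
  next
    case False
    then show ?thesis using hc_out by metis
  qed
qed

lemma gamma_l:
  assumes B: "B \<in> cls" and C: "C \<in> cls" and \<alpha>: "\<alpha> \<in> Alim G B C" and g: "g \<in> G"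
  shows "lim_lmult g \<alpha> = hc_comp G B C C (lim_of G C C g) \<alpha>"
proof (intro ext)
  fix m n
  show "lim_lmult g \<alpha> m n = hc_comp G B C C (lim_of G C C g) \<alpha> m n"
  proof (cases "m \<in> Wset G B \<and> n \<in> Wset G C")
    case True
    then have m: "m \<in> Wset G B" and n: "n \<in> Wset G C" by auto
    obtain N where N: "N \<in> Wset G C" "N \<subseteq> n" "killL m C N" "killR n C N"
      using good_ex[OF B C C m n n] by metis
    obtain c where c: "c \<in> lblock G (lideal m) C" "c \<in> \<alpha> m N" using rep_L[OF B C \<alpha> m N(1)] by blast
    have gN: "g \<in> lim_of G C C g N n" unfolding lim_of_val[OF N(1) n] by (rule coset_qI_self)
    have R: "hc_comp G B C C (lim_of G C C g) \<alpha> m n = coset (g * c) (qI m n)"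
      by (rule Char1[OF B C C \<alpha> of_Alim m n N(1) N(3) N(4) c gN])
    have cn: "c \<in> \<alpha> m n" using c(2) Alim_mono[OF \<alpha> m m N(1) n _ N(2)] by blast
    have gn: "\<And>x. x \<in> n \<Longrightarrow> g * x \<in> n" using tsi_lmul[OF tsi_W[OF n C] g] .
    have "lim_lmult g \<alpha> m n = coset (g * c) (qI m n)"
      by (rule lim_lmult_val[of n g \<alpha> m, OF gn Alim_mem_coset[OF \<alpha> m n cn]])
    then show ?thesis using R by simp
  next
    case False
    then show ?thesis using hc_out lim_lmult_out Alim_out[OF \<alpha>] by metis
  qed
qed

lemma gamma_r:
  assumes B: "B \<in> cls" and C: "C \<in> cls" and \<alpha>: "\<alpha> \<in> Alim G B C" and g: "g \<in> G"
  shows "lim_rmult \<alpha> g = hc_comp G B B C \<alpha> (lim_of G B B g)"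
proof (intro ext)
  fix m n
  show "lim_rmult \<alpha> g m n = hc_comp G B B C \<alpha> (lim_of G B B g) m n"
  proof (cases "m \<in> Wset G B \<and> n \<in> Wset G C")
    case True
    then have m: "m \<in> Wset G B" and n: "n \<in> Wset G C" by auto
    obtain M where M: "M \<in> Wset G B" "M \<subseteq> m" "killL m B M" "killR n B M"
      using good_ex[OF B B C m n m] by metis
    obtain d where d: "d \<in> rblock G (rideal n) B" "d \<in> \<alpha> M n" using rep_R[OF C B \<alpha> n M(1)] by blast
    have gM: "g \<in> lim_of G B B g m M" unfolding lim_of_val[OF m M(1)] by (rule coset_qI_self)
    have R: "hc_comp G B B C \<alpha> (lim_of G B B g) m n = coset (d * g) (qI m n)"
      by (rule Char2[OF B B C of_Alim \<alpha> m n M(1) M(3) M(4) d gM])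
    have dn: "d \<in> \<alpha> m n" using d(2) Alim_mono[OF \<alpha> M(1) m n n M(2)] by blast
    have gm: "\<And>x. x \<in> m \<Longrightarrow> x * g \<in> m" using tsi_rmul[OF tsi_W[OF m B] g] .
    have "lim_rmult \<alpha> g m n = coset (d * g) (qI m n)"
      by (rule lim_rmult_val[of m g \<alpha> n, OF gm Alim_mem_coset[OF \<alpha> m n dn]])
    then show ?thesis using R by simp
  next
    case False
    then show ?thesis using hc_out lim_rmult_out Alim_out[OF \<alpha>] by metis
  qed
qed

end

theorem mainTheorem14:
  fixes scale :: "'k::field \<Rightarrow> 'a::ring_1 \<Rightarrow> 'a" and G :: "'a set"
    and R :: "('a set \<times> 'a set) set" and cls :: "'a set set set"
  assumes alg: "k_algebra scale"
    and sub: "subalgebra scale G"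
    and eqv: "equiv (cfs scale G) R"
    and cls_def: "cls = cfs scale G // R"
    and HC: "strong_HC_block G cls"
  shows
    \<comment> \<open>well-definedness: admissible choices exist, the result is independent of them,
        and it defines an element of A(B,D)\<close>
    "(\<forall>B\<in>cls. \<forall>C\<in>cls. \<forall>D\<in>cls. \<forall>\<alpha>\<in>Alim G B C. \<forall>\<beta>\<in>Alim G C D.
        (\<forall>m\<in>Wset G B. \<forall>l\<in>Wset G D.
           (\<exists>n a0 b0. valid_choice G C m l \<alpha> \<beta> n a0 b0) \<and>
           (\<forall>n a0 b0 n' a0' b0'. valid_choice G C m l \<alpha> \<beta> n a0 b0 \<longrightarrow>
               valid_choice G C m l \<alpha> \<beta> n' a0' b0' \<longrightarrow>
               coset (b0 * a0) (qI m l) = coset (b0' * a0') (qI m l))) \<and>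
        hc_comp G B C D \<beta> \<alpha> \<in> Alim G B D)
   \<and> \<comment> \<open>bimodule map out of A(C,D) \<otimes>_Gamma A(B,C): biadditive, Gamma-balanced, Gamma-bilinear\<close>
    (\<forall>B\<in>cls. \<forall>C\<in>cls. \<forall>D\<in>cls. \<forall>\<alpha>\<in>Alim G B C. \<forall>\<alpha>'\<in>Alim G B C. \<forall>\<beta>\<in>Alim G C D. \<forall>\<beta>'\<in>Alim G C D.
        hc_comp G B C D \<beta> (lim_add \<alpha> \<alpha>') = lim_add (hc_comp G B C D \<beta> \<alpha>) (hc_comp G B C D \<beta> \<alpha>') \<and>
        hc_comp G B C D (lim_add \<beta> \<beta>') \<alpha> = lim_add (hc_comp G B C D \<beta> \<alpha>) (hc_comp G B C D \<beta>' \<alpha>) \<and>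
        (\<forall>g\<in>G. hc_comp G B C D (lim_rmult \<beta> g) \<alpha> = hc_comp G B C D \<beta> (lim_lmult g \<alpha>) \<and>
                hc_comp G B C D (lim_lmult g \<beta>) \<alpha> = lim_lmult g (hc_comp G B C D \<beta> \<alpha>) \<and>
                hc_comp G B C D \<beta> (lim_rmult \<alpha> g) = lim_rmult (hc_comp G B C D \<beta> \<alpha>) g))
   \<and> \<comment> \<open>associativity\<close>
    (\<forall>B\<in>cls. \<forall>C\<in>cls. \<forall>D\<in>cls. \<forall>E\<in>cls. \<forall>\<alpha>\<in>Alim G B C. \<forall>\<beta>\<in>Alim G C D. \<forall>\<delta>\<in>Alim G D E.
        hc_comp G B D E \<delta> (hc_comp G B C D \<beta> \<alpha>) = hc_comp G B C E (hc_comp G C D E \<delta> \<beta>) \<alpha>)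
   \<and> \<comment> \<open>gamma.alpha = (gamma) o alpha and alpha.gamma = alpha o (gamma)\<close>
    (\<forall>B\<in>cls. \<forall>C\<in>cls. \<forall>\<alpha>\<in>Alim G B C. \<forall>g\<in>G.
        lim_lmult g \<alpha> = hc_comp G B C C (lim_of G C C g) \<alpha> \<and>
        lim_rmult \<alpha> g = hc_comp G B B C \<alpha> (lim_of G B B g))
   \<and> \<comment> \<open>identities (1) \<in> A(B,B)\<close>
    (\<forall>B\<in>cls. lim_of G B B 1 \<in> Alim G B B \<and>
       (\<forall>C\<in>cls. \<forall>\<alpha>\<in>Alim G B C.
          hc_comp G B B C \<alpha> (lim_of G B B 1) = \<alpha> \<and> hc_comp G B C C (lim_of G C C 1) \<alpha> = \<alpha>))"
proof -
  interpret HCL G cls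
  proof
    show "0 \<in> G" "1 \<in> G" using sub unfolding subalgebra_def by simp_all
    show "x + y \<in> G" if "x \<in> G" "y \<in> G" for x y using sub that unfolding subalgebra_def by simp
    show "x * y \<in> G" if "x \<in> G" "y \<in> G" for x y using sub that unfolding subalgebra_def by simp
    show "- x \<in> G" if "x \<in> G" for x using sub that unfolding subalgebra_def by simp
    show "maximal_ideal G p" if "B \<in> cls" "p \<in> B" for B p
    proof -
      have "B \<subseteq> cfs scale G" using in_quotient_imp_subset[OF eqv] that(1) cls_def by simp
      then have "p \<in> cfs scale G" using that(2) by blast
      then show ?thesis unfolding cfs_def by simp
    qed
    show "B \<inter> C = {}" if "B \<in> cls" "C \<in> cls" "B \<noteq> C" for B C
      using quotient_disj[OF eqv] that cls_def by blast
    show "strong_HC_block G cls" by (rule HC)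
  qed
  have P1: "\<forall>B\<in>cls. \<forall>C\<in>cls. \<forall>D\<in>cls. \<forall>\<alpha>\<in>Alim G B C. \<forall>\<beta>\<in>Alim G C D.
        (\<forall>m\<in>Wset G B. \<forall>l\<in>Wset G D.
           (\<exists>n a0 b0. valid_choice G C m l \<alpha> \<beta> n a0 b0) \<and>
           (\<forall>n a0 b0 n' a0' b0'. valid_choice G C m l \<alpha> \<beta> n a0 b0 \<longrightarrow>
               valid_choice G C m l \<alpha> \<beta> n' a0' b0' \<longrightarrow>
               coset (b0 * a0) (qI m l) = coset (b0' * a0') (qI m l))) \<and>
        hc_comp G B C D \<beta> \<alpha> \<in> Alim G B D"
  proof (intro ballI conjI allI impI)
    fix B C D \<alpha> \<beta> m l
    assume B: "B \<in> cls" and C: "C \<in> cls" and D: "D \<in> cls" and \<alpha>: "\<alpha> \<in> Alim G B C" and \<beta>: "\<beta> \<in> Alim G C D"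
      and m: "m \<in> Wset G B" and l: "l \<in> Wset G D"
    show "\<exists>n a0 b0. valid_choice G C m l \<alpha> \<beta> n a0 b0" by (rule valid_ex[OF B C D \<alpha> \<beta> m l])
    fix n a0 b0 n' a0' b0'
    assume "valid_choice G C m l \<alpha> \<beta> n a0 b0" "valid_choice G C m l \<alpha> \<beta> n' a0' b0'"
    then show "coset (b0 * a0) (qI m l) = coset (b0' * a0') (qI m l)" by (rule unique[OF B C D \<alpha> \<beta> m l])
  next
    fix B C D \<alpha> \<beta>
    assume B: "B \<in> cls" and C: "C \<in> cls" and D: "D \<in> cls" and \<alpha>: "\<alpha> \<in> Alim G B C" and \<beta>: "\<beta> \<in> Alim G C D"
    show "hc_comp G B C D \<beta> \<alpha> \<in> Alim G B D" by (rule hc_Alim[OF B C D \<alpha> \<beta>])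
  qed
  have P2: "\<forall>B\<in>cls. \<forall>C\<in>cls. \<forall>D\<in>cls. \<forall>\<alpha>\<in>Alim G B C. \<forall>\<alpha>'\<in>Alim G B C. \<forall>\<beta>\<in>Alim G C D. \<forall>\<beta>'\<in>Alim G C D.
        hc_comp G B C D \<beta> (lim_add \<alpha> \<alpha>') = lim_add (hc_comp G B C D \<beta> \<alpha>) (hc_comp G B C D \<beta> \<alpha>') \<and>
        hc_comp G B C D (lim_add \<beta> \<beta>') \<alpha> = lim_add (hc_comp G B C D \<beta> \<alpha>) (hc_comp G B C D \<beta>' \<alpha>) \<and>
        (\<forall>g\<in>G. hc_comp G B C D (lim_rmult \<beta> g) \<alpha> = hc_comp G B C D \<beta> (lim_lmult g \<alpha>) \<and>
                hc_comp G B C D (lim_lmult g \<beta>) \<alpha> = lim_lmult g (hc_comp G B C D \<beta> \<alpha>) \<and>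
                hc_comp G B C D \<beta> (lim_rmult \<alpha> g) = lim_rmult (hc_comp G B C D \<beta> \<alpha>) g)"
  proof (intro ballI conjI)
    fix B C D \<alpha> \<alpha>' \<beta> \<beta>' g
    assume B: "B \<in> cls" and C: "C \<in> cls" and D: "D \<in> cls" and \<alpha>: "\<alpha> \<in> Alim G B C" and \<alpha>': "\<alpha>' \<in> Alim G B C"
      and \<beta>: "\<beta> \<in> Alim G C D" and \<beta>': "\<beta>' \<in> Alim G C D"
    show "hc_comp G B C D \<beta> (lim_add \<alpha> \<alpha>') = lim_add (hc_comp G B C D \<beta> \<alpha>) (hc_comp G B C D \<beta> \<alpha>')"
      by (rule comp_add1[OF B C D \<alpha> \<alpha>' \<beta>])
    show "hc_comp G B C D (lim_add \<beta> \<beta>') \<alpha> = lim_add (hc_comp G B C D \<beta> \<alpha>) (hc_comp G B C D \<beta>' \<alpha>)"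
      by (rule comp_add2[OF B C D \<alpha> \<beta> \<beta>'])
    assume g: "g \<in> G"
    show "hc_comp G B C D (lim_rmult \<beta> g) \<alpha> = hc_comp G B C D \<beta> (lim_lmult g \<alpha>)"
      by (rule comp_bal[OF B C D \<alpha> \<beta> g])
    show "hc_comp G B C D (lim_lmult g \<beta>) \<alpha> = lim_lmult g (hc_comp G B C D \<beta> \<alpha>)"
      by (rule comp_lm[OF B C D \<alpha> \<beta> g])
    show "hc_comp G B C D \<beta> (lim_rmult \<alpha> g) = lim_rmult (hc_comp G B C D \<beta> \<alpha>) g"
      by (rule comp_rm[OF B C D \<alpha> \<beta> g])
  qed
  have P3: "\<forall>B\<in>cls. \<forall>C\<in>cls. \<forall>D\<in>cls. \<forall>E\<in>cls. \<forall>\<alpha>\<in>Alim G B C. \<forall>\<beta>\<in>Alim G C D. \<forall>\<delta>\<in>Alim G D E.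
        hc_comp G B D E \<delta> (hc_comp G B C D \<beta> \<alpha>) = hc_comp G B C E (hc_comp G C D E \<delta> \<beta>) \<alpha>"
    using comp_assoc by blast
  have P4: "\<forall>B\<in>cls. \<forall>C\<in>cls. \<forall>\<alpha>\<in>Alim G B C. \<forall>g\<in>G.
        lim_lmult g \<alpha> = hc_comp G B C C (lim_of G C C g) \<alpha> \<and>
        lim_rmult \<alpha> g = hc_comp G B B C \<alpha> (lim_of G B B g)"
    using gamma_l gamma_r by blast
  have P5: "\<forall>B\<in>cls. lim_of G B B 1 \<in> Alim G B B \<and>
       (\<forall>C\<in>cls. \<forall>\<alpha>\<in>Alim G B C.
          hc_comp G B B C \<alpha> (lim_of G B B 1) = \<alpha> \<and> hc_comp G B C C (lim_of G C C 1) \<alpha> = \<alpha>)"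
  proof (intro ballI conjI)
    fix B assume B: "B \<in> cls"
    show "lim_of G B B 1 \<in> Alim G B B" by (rule of_Alim)
    fix C \<alpha> assume C: "C \<in> cls" and \<alpha>: "\<alpha> \<in> Alim G B C"
    show "hc_comp G B B C \<alpha> (lim_of G B B 1) = \<alpha>"
      using gamma_r[OF B C \<alpha> G1] rmult_one[OF \<alpha>] by simp
    show "hc_comp G B C C (lim_of G C C 1) \<alpha> = \<alpha>"
      using gamma_l[OF B C \<alpha> G1] lmult_one[OF \<alpha>] by simp
  qed
  show ?thesis using P1 P2 P3 P4 P5 by (intro conjI)
qed

end
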